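(* Let $H\in\mathbb{R}\setminus\{0\}$, $b>0$, $\lambda\ge0$, $\mu\in\mathbb{R}$, and let $u\in X_A$ be a real-valued solution of $$u_{xx}-H^2x^2u+|u|^2u+\rho(|u|^2)u=\mu u\quad\text{on }\mathbb{R}.$$ Then $$2\|u_x\|_2^2-2H^2\|xu\|_2^2-\frac12\|u\|_4^4+\int_{\mathbb{R}}u^2\,x\,\rho_x(|u|^2)\,dx=0,$$ where $\rho_x(|u|^2)$ denotes the $x$-derivative of $\rho(|u|^2)$.
   Context: $X_A=\{u\in H^1(\mathbb{R}) : xu\in L^2(\mathbb{R})\}$. For $f\in L^2(\mathbb{R})$, $\rho(f)\in H^2(\mathbb{R})$ denotes the unique solution of $-\rho_{xx}-\lambda(\rho_x^3)_x+b\rho=f$ on $\mathbb{R}$. $\|\cdot\|_p$ is the $L^p(\mathbb{R})$ norm. *)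

theory Defs
  imports "HOL-Analysis.Analysis"
begin

definition test_fun :: "(real \<Rightarrow> real) \<Rightarrow> bool" where
  "test_fun \<phi> \<longleftrightarrow> (\<forall>k x. (deriv ^^ k) \<phi> differentiable (at x))
                    \<and> (\<exists>R. \<forall>x. R < \<bar>x\<bar> \<longrightarrow> \<phi> x = 0)"

definition loc_int :: "(real \<Rightarrow> real) \<Rightarrow> bool" where
  "loc_int f \<longleftrightarrow> (\<forall>a b. set_integrable lborel {a..b} f)"

definition L2 :: "(real \<Rightarrow> real) \<Rightarrow> bool" where
  "L2 f \<longleftrightarrow> f \<in> borel_measurable lborel \<and> integrable lborel (\<lambda>x. (f x)\<^sup>2)"

definition weak_deriv :: "(real \<Rightarrow> real) \<Rightarrow> (real \<Rightarrow> real) \<Rightarrow> bool" where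
  "weak_deriv f g \<longleftrightarrow> loc_int f \<and> loc_int g \<and>
     (\<forall>\<phi>. test_fun \<phi> \<longrightarrow>
        (LINT x|lborel. f x * deriv \<phi> x) = - (LINT x|lborel. g x * \<phi> x))"

definition in_H1 :: "(real \<Rightarrow> real) \<Rightarrow> bool" where
  "in_H1 f \<longleftrightarrow> L2 f \<and> (\<exists>g. weak_deriv f g \<and> L2 g)"

definition in_H2 :: "(real \<Rightarrow> real) \<Rightarrow> bool" where
  "in_H2 f \<longleftrightarrow> L2 f \<and> (\<exists>g. weak_deriv f g \<and> in_H1 g)"

definition in_XA :: "(real \<Rightarrow> real) \<Rightarrow> bool" where
  "in_XA u \<longleftrightarrow> in_H1 u \<and> L2 (\<lambda>x. x * u x)"

text \<open>r in H^2 solves -r'' - lam (r'^3)' + b r = f on R (weak form).\<close>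
definition is_rho :: "real \<Rightarrow> real \<Rightarrow> (real \<Rightarrow> real) \<Rightarrow> (real \<Rightarrow> real) \<Rightarrow> bool" where
  "is_rho lam b f r \<longleftrightarrow> in_H2 r \<and>
     (\<exists>r1. weak_deriv r r1 \<and>
        (\<forall>\<phi>. test_fun \<phi> \<longrightarrow>
           (LINT x|lborel. (r1 x + lam * (r1 x) ^ 3) * deriv \<phi> x + b * r x * \<phi> x)
             = (LINT x|lborel. f x * \<phi> x)))"

text \<open>u solves u'' - H^2 x^2 u + u^3 + r u = mu u on R in the distributional sense
  (u real-valued, so |u|^2 u = u^3).\<close>
definition solves_eq :: "real \<Rightarrow> real \<Rightarrow> (real \<Rightarrow> real) \<Rightarrow> (real \<Rightarrow> real) \<Rightarrow> bool" where
  "solves_eq H mu r u \<longleftrightarrow>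
     (\<forall>\<phi>. test_fun \<phi> \<longrightarrow>
        (LINT x|lborel. u x * deriv (deriv \<phi>) x)
          = (LINT x|lborel. (H\<^sup>2 * x\<^sup>2 * u x - (u x) ^ 3 - r x * u x + mu * u x) * \<phi> x))"

end

theory Submission
  imports Defs "HOL-Computational_Algebra.Polynomial"
begin

definition smooth :: "(real \<Rightarrow> real) \<Rightarrow> bool" where
  "smooth f \<longleftrightarrow> (\<forall>k x. (deriv ^^ k) f differentiable (at x))"

lemma smooth_D:
  assumes "D 0 = f" "\<And>k x. (D k has_real_derivative D (Suc k) x) (at x)"
  shows "smooth f" "(deriv ^^ k) f = D k"
proof -
  have eq: "(deriv ^^ k) f = D k" for k
  proof (induction k)
    case 0 then show ?case using assms by simp
  next
    case (Suc k)
    show ?case using assms(2) by (auto simp: Suc DERIV_imp_deriv)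
  qed
  show "(deriv ^^ k) f = D k" by (rule eq)
  show "smooth f" unfolding smooth_def eq
    using assms(2) real_differentiable_def by blast
qed

lemma smooth_hasD:
  assumes "smooth f"
  shows "((deriv ^^ k) f has_real_derivative (deriv ^^ Suc k) f x) (at x)"
  using assms unfolding smooth_def
  by (simp add: DERIV_deriv_iff_real_differentiable)

lemma smooth_diff: "smooth f \<Longrightarrow> f differentiable (at x)"
  unfolding smooth_def by (metis funpow_0)

lemma smooth_primitive:
  assumes "smooth g" "\<And>x. (F has_real_derivative g x) (at x)"
  shows "smooth F" "deriv F = g"
proof -
  define D where "D k = (if k = 0 then F else (deriv ^^ (k - 1)) g)" for k
  have "D 0 = F" by (simp add: D_def)
  moreover have "(D k has_real_derivative D (Suc k) x) (at x)" for k x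
    using assms smooth_hasD[OF assms(1), of "k - 1" x] by (cases k) (auto simp: D_def)
  ultimately show "smooth F" using smooth_D by blast
  show "deriv F = g" using assms(2) by (auto simp: DERIV_imp_deriv)
qed

lemma smooth_deriv: "smooth f \<Longrightarrow> smooth (deriv f)"
  unfolding smooth_def by (metis funpow_Suc_right o_apply)

lemma smooth_const: "smooth (\<lambda>x. c)"
  by (rule smooth_D(1)[where D="\<lambda>k x. if k = 0 then c else 0"]) auto

lemma smooth_add:
  assumes "smooth f" "smooth g" shows "smooth (\<lambda>x. f x + g x)"
  by (rule smooth_D(1)[where D="\<lambda>k x. (deriv ^^ k) f x + (deriv ^^ k) g x"])
     (auto intro!: derivative_eq_intros smooth_hasD assms)

lemma smooth_cmult:
  assumes "smooth f" shows "smooth (\<lambda>x. c * f x)"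
  by (rule smooth_D(1)[where D="\<lambda>k x. c * (deriv ^^ k) f x"])
     (auto intro!: derivative_eq_intros smooth_hasD assms)

lemma smooth_minus:
  assumes "smooth f" "smooth g" shows "smooth (\<lambda>x. f x - g x)"
  using smooth_add[OF assms(1) smooth_cmult[OF assms(2), of "-1"]] by simp

lemma smooth_affine:
  assumes "smooth f" shows "smooth (\<lambda>x. f (c * x + d))"
  by (rule smooth_D(1)[where D="\<lambda>k x. c ^ k * (deriv ^^ k) f (c * x + d)"])
     (auto intro!: derivative_eq_intros DERIV_chain2[OF smooth_hasD[OF assms]])

lemma Suc_choose': "Suc n choose k = (n choose k) + (if k = 0 then 0 else (n choose (k-1)))"
  by (cases k) simp_all

lemma smooth_mult:
  assumes f: "smooth f" and g: "smooth g" shows "smooth (\<lambda>x. f x * g x)"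
proof (rule smooth_D(1)[where D="\<lambda>n x. (\<Sum>i = 0..n. of_nat (n choose i) * (deriv ^^ i) f x * (deriv ^^ (n-i)) g x)"])
  fix n x
  have *: "\<And>n. ((deriv ^^ n) f has_field_derivative deriv ((deriv ^^ n) f) x) (at x)"
          "\<And>n. ((deriv ^^ n) g has_field_derivative deriv ((deriv ^^ n) g) x) (at x)"
    using smooth_hasD[OF f] smooth_hasD[OF g] by auto
  have sumeq: "(\<Sum>i = 0..n.
               of_nat (n choose i) * (deriv ((deriv ^^ i) f) x * (deriv ^^ (n-i)) g x + deriv ((deriv ^^ (n-i)) g) x * (deriv ^^ i) f x)) =
            g x * deriv ((deriv ^^ n) f) x + (\<Sum>i = 0..n. (deriv ^^ i) f x * (of_nat (Suc n choose i) * (deriv ^^ (Suc n - i)) g x))"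
    apply (simp add: Suc_choose' algebra_simps sum.distrib)
    apply (subst (4) sum_Suc_reindex)
    apply (auto simp: algebra_simps Suc_diff_le intro: sum.cong)
    done
  show "((\<lambda>x. \<Sum>i = 0..n. of_nat (n choose i) * (deriv ^^ i) f x * (deriv ^^ (n-i)) g x) has_real_derivative
         (\<Sum>i = 0..Suc n. of_nat (Suc n choose i) * (deriv ^^ i) f x * (deriv ^^ (Suc n - i)) g x)) (at x)"
    apply (rule derivative_eq_intros | simp)+
           apply (auto intro: DERIV_mult *)
    using sumeq by (simp add: algebra_simps)
qed simp


lemma poly_exp_lim: "((\<lambda>t. poly q t * exp (-t)) \<longlongrightarrow> (0::real)) at_top"
proof -
  have "((\<lambda>t. \<Sum>i\<le>degree q. coeff q i * (t ^ i / exp t)) \<longlongrightarrow> (\<Sum>i\<le>degree q. coeff q i * 0)) at_top"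
    by (intro tendsto_intros tendsto_power_div_exp_0)
  moreover have "poly q t * exp (-t) = (\<Sum>i\<le>degree q. coeff q i * (t ^ i / exp t))" for t
    by (simp add: poly_altdef sum_distrib_right exp_minus divide_inverse mult.assoc)
  ultimately show ?thesis by simp
qed

definition fexp :: "real \<Rightarrow> real" where
  "fexp x = (if x > 0 then exp (-1/x) else 0)"

fun Pk :: "nat \<Rightarrow> real poly" where
  "Pk 0 = 1"
| "Pk (Suc k) = [:0,0,1:] * (Pk k - pderiv (Pk k))"

definition Dk :: "nat \<Rightarrow> real \<Rightarrow> real" where
  "Dk k x = (if x > 0 then poly (Pk k) (1/x) * exp (-1/x) else 0)"

lemma Dk_at0: "((\<lambda>y. Dk k y / y) \<longlongrightarrow> 0) (at (0::real))"
proof (rule filterlim_split_at)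
  show "((\<lambda>y. Dk k y / y) \<longlongrightarrow> 0) (at_left (0::real))"
  proof (rule tendsto_eventually)
    show "\<forall>\<^sub>F y in at_left 0. Dk k y / y = 0"
      using eventually_at_left_real[of "-1" 0, OF neg_less_0_iff_less[THEN iffD2, OF zero_less_one]] by eventually_elim (auto simp: Dk_def)
  qed
  have lim: "((\<lambda>y. poly ([:0,1:] * Pk k) (inverse y) * exp (- inverse y)) \<longlongrightarrow> 0) (at_right (0::real))"
    by (rule filterlim_compose[OF poly_exp_lim filterlim_inverse_at_top_right])
  show "((\<lambda>y. Dk k y / y) \<longlongrightarrow> 0) (at_right (0::real))"
  proof (rule Lim_transform_eventually[OF lim])
    show "\<forall>\<^sub>F y in at_right 0. poly ([:0,1:] * Pk k) (inverse y) * exp (- inverse y) = Dk k y / y"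
      using eventually_at_right_real[of 0 1, OF zero_less_one] by eventually_elim (auto simp: Dk_def field_simps)
  qed
qed

lemma Dk_deriv: "(Dk k has_real_derivative Dk (Suc k) x) (at x)"
proof (cases "x > 0")
  case True
  have "((\<lambda>x. poly (Pk k) (1/x) * exp (-1/x)) has_real_derivative Dk (Suc k) x) (at x)"
    using True
    apply (auto intro!: derivative_eq_intros DERIV_chain2[OF poly_DERIV] simp: Dk_def)
    apply (simp add: field_simps power2_eq_square)
    done
  then show ?thesis
    by (rule has_field_derivative_transform_within_open[of _ _ _ "{0<..}"]) (use True in \<open>auto simp: Dk_def\<close>)
next
  case False
  show ?thesis
  proof (cases "x < 0")
    case True
    have "((\<lambda>x. 0) has_real_derivative Dk (Suc k) x) (at x)"
      using True by (auto simp: Dk_def)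
    then show ?thesis
      by (rule has_field_derivative_transform_within_open[of _ _ _ "{..<0}"]) (use True in \<open>auto simp: Dk_def\<close>)
  next
    case False
    then have x: "x = 0" using \<open>\<not> x > 0\<close> by auto
    show ?thesis unfolding x has_field_derivative_iff
      using Dk_at0[of k] by (simp add: Dk_def)
  qed
qed

lemma smooth_fexp: "smooth fexp"
proof (rule smooth_D(1)[where D=Dk])
  show "Dk 0 = fexp" by (auto simp: Dk_def fexp_def fun_eq_iff)
qed (rule Dk_deriv)


lemma loc_int_kN:
  assumes "loc_int k"
  shows "integrable lborel (\<lambda>x. indicator {a..b} x * k x)"
  using assms unfolding loc_int_def set_integrable_def by simp

lemma Z_bounded:
  fixes k :: "real \<Rightarrow> real"
  assumes "loc_int k" "\<And>(a::real) (b::real). a \<le> b \<Longrightarrow> (LBINT x=a..b. k x) = 0"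
  shows "AE x in lborel. indicator {-N..N} x * k x = 0"
proof -
  define kN where "kN x = indicator {-N..N} x * k x" for x
  have int: "integrable lborel kN" unfolding kN_def by (rule loc_int_kN[OF assms(1)])
  then have [measurable]: "kN \<in> borel_measurable lborel" by auto
  have intI: "integrable lborel (\<lambda>y. g (kN y) * indicator A y)"
    if "A \<in> sets borel" "\<And>t. \<bar>g t\<bar> \<le> \<bar>t\<bar>" "g \<in> borel_measurable borel" for A g
  proof (rule Bochner_Integration.integrable_bound[OF int])
    show "(\<lambda>y. g (kN y) * indicator A y) \<in> borel_measurable lborel" using that by measurable
    show "AE y in lborel. norm (g (kN y) * indicator A y) \<le> norm (kN y)"
      using that(2) by (auto simp: indicator_def abs_mult)
  qed
  have zero: "(LINT y|lborel. kN y * indicator {x<..} y) = 0" for x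
  proof -
    have eq: "kN y * indicator {x<..} y = indicator ({-N..N} \<inter> {x<..}) y * k y" for y
      by (auto simp: kN_def indicator_def)
    consider "x < -N" | "-N \<le> x" "x < N" | "N \<le> x" by linarith
    then show ?thesis
    proof cases
      case 1
      then have "{-N..N} \<inter> {x<..} = {-N..N}" by auto
      show ?thesis
      proof (cases "0 \<le> N")
        case True
        then show ?thesis using assms(2)[of "-N" N] 1 \<open>{-N..N} \<inter> {x<..} = {-N..N}\<close>
          by (simp add: eq interval_integral_Icc set_lebesgue_integral_def)
      next
        case False
        then have "{-N..N} \<inter> {x<..} = {}" by auto
        then show ?thesis by (simp add: eq)
      qed
    next
      case 2
      then have "{-N..N} \<inter> {x<..} = {x<..N}" by auto
      then show ?thesis using assms(2)[of x N] 2
        by (simp add: eq interval_integral_Ioc set_lebesgue_integral_def)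
    next
      case 3
      then have "{-N..N} \<inter> {x<..} = {}" by auto
      then show ?thesis by (simp add: eq)
    qed
  qed
  define M1 where "M1 = density lborel (\<lambda>y. ennreal (max 0 (kN y)))"
  define M2 where "M2 = density lborel (\<lambda>y. ennreal (max 0 (- kN y)))"
  have em: "emeasure (density lborel (\<lambda>y. ennreal (g (kN y)))) {x<..} = ennreal (LINT y|lborel. g (kN y) * indicator {x<..} y)"
    if "\<And>t. \<bar>g t\<bar> \<le> \<bar>t\<bar>" "g \<in> borel_measurable borel" "\<And>t. g t \<ge> 0" for g x
  proof -
    have "emeasure (density lborel (\<lambda>y. ennreal (g (kN y)))) {x<..} = (\<integral>\<^sup>+ y. ennreal (g (kN y)) * indicator {x<..} y \<partial>lborel)"
      using that by (subst emeasure_density) auto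
    also have "\<dots> = (\<integral>\<^sup>+ y. ennreal (g (kN y) * indicator {x<..} y) \<partial>lborel)"
      by (auto intro!: nn_integral_cong simp: indicator_def)
    also have "\<dots> = ennreal (LINT y|lborel. g (kN y) * indicator {x<..} y)"
      using that by (intro nn_integral_eq_integral intI) auto
    finally show ?thesis .
  qed
  have "M1 = M2"
  proof (rule measure_eqI_lessThan)
    show "sets M1 = sets borel" "sets M2 = sets borel" by (auto simp: M1_def M2_def)
    fix x
    show "emeasure M1 {x<..} < \<infinity>" unfolding M1_def
      by (subst em) auto
    have "(LINT y|lborel. max 0 (kN y) * indicator {x<..} y) - (LINT y|lborel. max 0 (- kN y) * indicator {x<..} y)
         = (LINT y|lborel. kN y * indicator {x<..} y)"
    proof -
      have i1: "integrable lborel (\<lambda>y. max 0 (kN y) * indicator {x<..} y)" by (rule intI) auto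
      have i2: "integrable lborel (\<lambda>y. max 0 (- kN y) * indicator {x<..} y)" by (rule intI) auto
      show ?thesis
        by (subst Bochner_Integration.integral_diff[OF i1 i2, symmetric])
           (auto intro!: Bochner_Integration.integral_cong simp: indicator_def)
    qed
    then show "emeasure M1 {x<..} = emeasure M2 {x<..}" unfolding M1_def M2_def
      using zero[of x] by (subst (1 2) em) auto
  qed
  then have "AE y in lborel. ennreal (max 0 (kN y)) = ennreal (max 0 (- kN y))"
    unfolding M1_def M2_def by (intro sigma_finite_measure.density_unique[OF sigma_finite_lborel]) auto
  then show ?thesis
    by eventually_elim (auto simp: kN_def max_def split: if_splits)
qed

lemma Z:
  fixes k :: "real \<Rightarrow> real"
  assumes "loc_int k" "\<And>(a::real) (b::real). a \<le> b \<Longrightarrow> (LBINT x=a..b. k x) = 0"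
  shows "AE x in lborel. k x = 0"
proof -
  have "\<forall>N::nat. AE x in lborel. indicator {-real N..real N} x * k x = 0"
    using Z_bounded[OF assms] by blast
  then have "AE x in lborel. \<forall>N::nat. indicator {-real N..real N} x * k x = 0"
    by (subst AE_all_countable) blast
  then show ?thesis
  proof eventually_elim
    case (elim x)
    obtain N :: nat where "\<bar>x\<bar> \<le> real N" using real_arch_simple by blast
    then show ?case using elim[rule_format, of N] by (auto simp: indicator_def)
  qed
qed


lemma smooth_isCont: "smooth g \<Longrightarrow> isCont g x"
  using smooth_hasD[of g 0 x] by (auto intro: DERIV_isCont)

lemma cont_meas: "(\<And>x. isCont g x) \<Longrightarrow> g \<in> borel_measurable borel"
  by (intro borel_measurable_continuous_onI continuous_at_imp_continuous_on) auto

lemma loc_int_meas: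
  assumes "loc_int h" shows "h \<in> borel_measurable lborel"
proof (rule borel_measurable_LIMSEQ_real)
  fix i :: nat
  show "(\<lambda>x. indicator {-real i..real i} x * h x) \<in> borel_measurable lborel"
    using loc_int_kN[OF assms] by auto
next
  fix x :: real
  obtain N :: nat where N: "\<bar>x\<bar> \<le> real N" using real_arch_simple by blast
  show "(\<lambda>i. indicator {-real i..real i} x * h x) \<longlonglongrightarrow> h x"
  proof (rule tendsto_eventually)
    show "\<forall>\<^sub>F i in sequentially. indicator {-real i..real i} x * h x = h x"
      unfolding eventually_sequentially using N by (intro exI[of _ N]) (auto simp: indicator_def)
  qed
qed

lemma int_h_bump:
  assumes "loc_int h" "\<And>x. isCont p x" "\<And>x. \<bar>p x\<bar> \<le> B" "\<And>x. x \<notin> {A..C} \<Longrightarrow> p x = 0"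
  shows "integrable lborel (\<lambda>x. h x * p x)"
proof (rule Bochner_Integration.integrable_bound)
  show "integrable lborel (\<lambda>x. B * (indicator {A..C} x * h x))"
    using loc_int_kN[OF assms(1)] by auto
  show "(\<lambda>x. h x * p x) \<in> borel_measurable lborel"
    using loc_int_meas[OF assms(1)] cont_meas[OF assms(2)] by measurable
  show "AE x in lborel. norm (h x * p x) \<le> norm (B * (indicator {A..C} x * h x))"
  proof (intro AE_I2)
    fix x
    have "\<bar>h x * p x\<bar> \<le> \<bar>B * (indicator {A..C} x * h x)\<bar>"
    proof (cases "x \<in> {A..C}")
      case True
      then show ?thesis using assms(3)[of x]
        by (auto simp: abs_mult) (metis abs_ge_zero mult.commute mult_left_mono)
    qed (use assms(4) in auto)
    then show "norm (h x * p x) \<le> norm (B * (indicator {A..C} x * h x))" by simp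
  qed
qed

lemma loc_int_const: "loc_int (\<lambda>x. c)"
proof -
  have "integrable lborel (\<lambda>x. indicator {a..b} x * c)" for a b :: real
    by (intro integrable_mult_left integrable_real_indicator) (auto simp: emeasure_lborel_Icc_eq)
  then show ?thesis unfolding loc_int_def set_integrable_def by simp
qed

lemma prim_deriv:
  fixes c :: real
  assumes "\<And>x. isCont g x"
  shows "((\<lambda>x. LBINT t=c..x. g t) has_real_derivative g x) (at x)"
proof -
  have "((\<lambda>x. LBINT t=c..x. g t) has_vector_derivative g x) (at x within {min c x - 1..max c x + 1})"
    by (rule interval_integral_FTC2) (auto intro: continuous_at_imp_continuous_on assms)
  then show ?thesis
    by (subst (asm) at_within_Icc_at) (auto simp: has_real_derivative_iff_has_vector_derivative)
qed

definition beta :: "real \<Rightarrow> real" where "beta x = fexp x * fexp (1 - x)"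

lemma smooth_beta: "smooth beta"
proof -
  have "smooth (\<lambda>x. fexp ((-1) * x + 1))" by (rule smooth_affine[OF smooth_fexp])
  then show ?thesis unfolding beta_def using smooth_mult[OF smooth_fexp] by simp
qed

lemma beta_cont: "isCont beta x" by (rule smooth_isCont[OF smooth_beta])
lemma beta_nonneg: "beta x \<ge> 0" by (simp add: beta_def fexp_def)
lemma beta_zero: "x \<le> 0 \<or> x \<ge> 1 \<Longrightarrow> beta x = 0" by (auto simp: beta_def fexp_def)
lemma beta_pos: "0 < x \<Longrightarrow> x < 1 \<Longrightarrow> beta x > 0" by (auto simp: beta_def fexp_def)

definition S0 :: "real \<Rightarrow> real" where "S0 x = (LBINT t=0..x. beta t)"

lemma S0_deriv: "(S0 has_real_derivative beta x) (at x)"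
  unfolding S0_def using prim_deriv[OF beta_cont, of 0] by (simp add: zero_ereal_def)

lemma S0_neg: "x \<le> 0 \<Longrightarrow> S0 x = 0"
proof -
  assume x: "x \<le> 0"
  have "S0 x = - (LBINT t=x..0. beta t)" unfolding S0_def by (rule interval_integral_endpoints_reverse)
  also have "(LBINT t=x..0. beta t) = (LBINT t=x..0. 0)"
    by (rule interval_integral_cong) (use x in \<open>auto simp: einterval_iff intro!: beta_zero\<close>)
  finally show ?thesis by simp
qed

definition cb :: real where "cb = S0 1"

lemma S0_ge1: "x \<ge> 1 \<Longrightarrow> S0 x = cb"
proof -
  assume x: "x \<ge> 1"
  have "(LBINT t=0..1. beta t) + (LBINT t=1..x. beta t) = (LBINT t=0..x. beta t)"
  proof (rule interval_integral_sum)
    have "interval_lebesgue_integrable lborel (ereal 0) (ereal x) beta"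
      by (rule interval_integrable_isCont) (rule beta_cont)
    moreover have "min 0 (min 1 (ereal x)) = 0" "max 0 (max 1 (ereal x)) = ereal x"
      using x by (auto simp: min_def max_def)
    ultimately show "interval_lebesgue_integrable lborel (min 0 (min 1 (ereal x))) (max 0 (max 1 (ereal x))) beta"
      by (simp add: zero_ereal_def)
  qed
  moreover have "(LBINT t=1..x. beta t) = (LBINT t=1..x. 0)"
    by (rule interval_integral_cong) (use x in \<open>auto simp: einterval_iff intro!: beta_zero\<close>)
  ultimately show ?thesis by (simp add: S0_def cb_def one_ereal_def)
qed

lemma S0_mono: "x \<le> y \<Longrightarrow> S0 x \<le> S0 y"
  by (rule DERIV_nonneg_imp_nondecreasing) (use S0_deriv beta_nonneg in blast)+

lemma cb_pos: "cb > 0"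
proof -
  have ge: "cb \<ge> 0" using S0_mono[of 0 1] S0_neg[of 0] by (simp add: cb_def)
  show ?thesis
  proof (rule ccontr)
    assume "\<not> cb > 0"
    then have c0: "cb = 0" using ge by simp
    have "\<forall>y. \<bar>1/2 - y\<bar> < 1/2 \<longrightarrow> S0 (1/2) = S0 y"
    proof (intro allI impI)
      fix y :: real assume "\<bar>1/2 - y\<bar> < 1/2"
      then have "0 \<le> y" "y \<le> 1" by (auto simp: abs_if split: if_splits)
      then have "S0 y = 0" "S0 (1/2) = 0"
        using S0_mono[of 0 y] S0_mono[of y 1] S0_mono[of 0 "1/2"] S0_mono[of "1/2" 1] S0_neg[of 0] c0
        by (auto simp: cb_def)
      then show "S0 (1/2) = S0 y" by simp
    qed
    then have "beta (1/2) = 0" by (intro DERIV_local_const[OF S0_deriv, of "1/2" "1/2"]) auto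
    then show False using beta_pos[of "1/2"] by simp
  qed
qed

definition Sst :: "real \<Rightarrow> real" where "Sst x = S0 x / cb"

lemma smooth_Sst: "smooth Sst"
proof -
  have "smooth S0" by (rule smooth_primitive(1)[OF smooth_beta S0_deriv])
  then show ?thesis unfolding Sst_def using smooth_cmult[of S0 "1/cb"] by simp
qed
lemma Sst_neg: "x \<le> 0 \<Longrightarrow> Sst x = 0" by (simp add: Sst_def S0_neg)
lemma Sst_ge1: "x \<ge> 1 \<Longrightarrow> Sst x = 1" using cb_pos by (simp add: Sst_def S0_ge1)
lemma Sst_bounds: "0 \<le> Sst x" "Sst x \<le> 1"
proof -
  have "0 \<le> S0 x"
    using S0_neg[of x] S0_mono[of 0 x] S0_neg[of 0] by (cases "x \<le> 0") auto
  moreover have "S0 x \<le> cb"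
    using S0_ge1[of x] S0_mono[of x 1] by (cases "x \<ge> 1") (auto simp: cb_def)
  ultimately show "0 \<le> Sst x" "Sst x \<le> 1" using cb_pos by (auto simp: Sst_def)
qed

definition psi :: "real \<Rightarrow> real \<Rightarrow> real \<Rightarrow> real \<Rightarrow> real" where
  "psi n a b x = Sst (n * (x - a) + 1) - Sst (n * (x - b))"

lemma smooth_psi: "smooth (psi n a b)"
proof -
  have 1: "smooth (\<lambda>x. Sst (n * x + (1 - n * a)))" by (rule smooth_affine[OF smooth_Sst])
  have 2: "smooth (\<lambda>x. Sst (n * x + (- n * b)))" by (rule smooth_affine[OF smooth_Sst])
  have "psi n a b = (\<lambda>x. Sst (n * x + (1 - n * a)) - Sst (n * x + (- n * b)))"
    by (auto simp: psi_def fun_eq_iff algebra_simps)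
  then show ?thesis using smooth_minus[OF 1 2] by simp
qed

lemma psi_cont: "isCont (psi n a b) x" by (rule smooth_isCont[OF smooth_psi])

lemma psi_bound: "\<bar>psi n a b x\<bar> \<le> 1"
  using Sst_bounds[of "n * (x - a) + 1"] Sst_bounds[of "n * (x - b)"] by (auto simp: psi_def)

lemma psi_supp:
  assumes "a \<le> b" "n \<ge> 1" "x \<notin> {a-1..b+1}"
  shows "psi n a b x = 0"
proof (cases "x < a - 1")
  case True
  have "n * (x - a) \<le> 1 * (x - a)" using True assms by (intro mult_right_mono_neg) auto
  then have "n * (x - a) \<le> x - a" by simp
  then have "n * (x - a) + 1 \<le> 0" using True by linarith
  moreover have "n * (x - b) \<le> 0" using True assms by (intro mult_nonneg_nonpos) auto
  ultimately show ?thesis by (simp add: psi_def Sst_neg)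
next
  case False
  then have x: "x > b + 1" using assms by auto
  have "n * (x - b) \<ge> 1 * (x - b)" using x assms by (intro mult_right_mono) auto
  then have "n * (x - b) \<ge> 1" using x by (smt (verit))
  moreover have "n * (x - a) \<ge> 0" using x assms by auto
  ultimately show ?thesis using x by (simp add: psi_def Sst_ge1)
qed

lemma psi_lim:
  assumes "a \<le> b"
  shows "(\<lambda>m. psi (real (Suc m)) a b x) \<longlonglongrightarrow> indicator {a..b} x"
proof (rule tendsto_eventually)
  show "\<forall>\<^sub>F m in sequentially. psi (real (Suc m)) a b x = indicator {a..b} x"
  proof (cases "x < a")
    case True
    obtain N :: nat where N: "1 / (a - x) \<le> real N" using real_arch_simple by blast
    show ?thesis unfolding eventually_sequentially
    proof (intro exI[of _ N] allI impI)
      fix m assume "N \<le> m"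
      then have "1 / (a - x) \<le> real (Suc m)" using N by linarith
      then have "1 \<le> real (Suc m) * (a - x)" using True by (simp add: field_simps)
      then have "real (Suc m) * (x - a) + 1 \<le> 0" by (simp add: algebra_simps)
      moreover have "real (Suc m) * (x - b) \<le> 0" using True assms by (intro mult_nonneg_nonpos) auto
      ultimately show "psi (real (Suc m)) a b x = indicator {a..b} x"
        using True by (simp add: psi_def Sst_neg)
    qed
  next
    case False
    show ?thesis
    proof (cases "x \<le> b")
      case True
      have "real (Suc m) * (x - a) + 1 \<ge> 1" "real (Suc m) * (x - b) \<le> 0" for m
        using True False by (auto intro: mult_nonneg_nonpos)
      then show ?thesis using True False by (auto simp: psi_def Sst_neg Sst_ge1)
    next
      case xb: False
      obtain N :: nat where N: "1 / (x - b) \<le> real N" using real_arch_simple by blast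
      show ?thesis unfolding eventually_sequentially
      proof (intro exI[of _ N] allI impI)
        fix m assume "N \<le> m"
        then have "1 / (x - b) \<le> real (Suc m)" using N by linarith
        then have "1 \<le> real (Suc m) * (x - b)" using xb by (simp add: field_simps)
        moreover have "real (Suc m) * (x - a) + 1 \<ge> 1" using False by auto
        ultimately show "psi (real (Suc m)) a b x = indicator {a..b} x"
          using xb by (simp add: psi_def Sst_ge1)
      qed
    qed
  qed
qed

lemma psi_int_lim:
  assumes "loc_int h" "a \<le> b"
  shows "(\<lambda>m. LINT x|lborel. h x * psi (real (Suc m)) a b x) \<longlonglongrightarrow> (LBINT x=a..b. h x)"
proof -
  have "(\<lambda>m. LINT x|lborel. h x * psi (real (Suc m)) a b x) \<longlonglongrightarrow> (LINT x|lborel. h x * indicator {a..b} x)"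
  proof (rule integral_dominated_convergence[where w="\<lambda>x. indicator {a-1..b+1} x * \<bar>h x\<bar>"])
    show "(\<lambda>x. h x * indicator {a..b} x) \<in> borel_measurable lborel"
      using loc_int_meas[OF assms(1)] by measurable
    show "(\<lambda>x. h x * psi (real (Suc m)) a b x) \<in> borel_measurable lborel" for m
      using loc_int_meas[OF assms(1)] cont_meas[OF psi_cont] by measurable
    show "integrable lborel (\<lambda>x. indicator {a-1..b+1} x * \<bar>h x\<bar>)"
      using loc_int_kN[OF assms(1), of "a-1" "b+1"] 
      by (metis (no_types, lifting) Bochner_Integration.integrable_cong abs_mult integrable_abs abs_indicator)
    show "AE x in lborel. (\<lambda>m. h x * psi (real (Suc m)) a b x) \<longlonglongrightarrow> h x * indicator {a..b} x"
      by (intro AE_I2 tendsto_mult_left psi_lim assms)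
    show "AE x in lborel. norm (h x * psi (real (Suc m)) a b x) \<le> indicator {a-1..b+1} x * \<bar>h x\<bar>" for m
    proof (intro AE_I2)
      fix x
      show "norm (h x * psi (real (Suc m)) a b x) \<le> indicator {a-1..b+1} x * \<bar>h x\<bar>"
      proof (cases "x \<in> {a-1..b+1}")
        case True
        then show ?thesis using psi_bound[of "real (Suc m)" a b x]
          by (auto simp: abs_mult intro: mult_left_le)
      qed (simp add: psi_supp assms)
    qed
  qed
  moreover have "(LINT x|lborel. h x * indicator {a..b} x) = (LBINT x=a..b. h x)"
    using assms(2) by (simp add: interval_integral_Icc set_lebesgue_integral_def mult.commute)
  ultimately show ?thesis by simp
qed


lemma test_fun_iff: "test_fun \<phi> \<longleftrightarrow> smooth \<phi> \<and> (\<exists>R. \<forall>x. R < \<bar>x\<bar> \<longrightarrow> \<phi> x = 0)"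
  unfolding test_fun_def smooth_def ..

lemma test_deriv_zero:
  fixes \<phi> :: "real \<Rightarrow> real" and x R :: real
  assumes "\<forall>x. R < \<bar>x\<bar> \<longrightarrow> \<phi> x = 0" "R < \<bar>x\<bar>"
  shows "deriv \<phi> x = 0"
proof -
  have "((\<lambda>x. 0) has_real_derivative 0) (at x)" by simp
  then have "(\<phi> has_real_derivative 0) (at x)"
    by (rule has_field_derivative_transform_within_open[of _ _ _ "{y. R < \<bar>y\<bar>}"])
       (use assms in \<open>auto intro!: open_Collect_less continuous_intros\<close>)
  then show ?thesis by (rule DERIV_imp_deriv)
qed

lemma cont_bounded:
  fixes a b :: real and q :: "real \<Rightarrow> real" 
  assumes "\<And>x. isCont q x"
  obtains B where "\<And>x. x \<in> {a..b} \<Longrightarrow> \<bar>q x\<bar> \<le> B"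
proof -
  have "compact (q ` {a..b})"
    by (intro compact_continuous_image continuous_at_imp_continuous_on) (auto intro: assms compact_Icc)
  then obtain B where "\<forall>y\<in>q ` {a..b}. norm y \<le> B" using compact_imp_bounded bounded_iff by metis
  then have "\<And>x. x \<in> {a..b} \<Longrightarrow> \<bar>q x\<bar> \<le> B" by auto
  then show ?thesis by (rule that)
qed

lemma loc_int_interval:
  assumes "loc_int g"
  shows "interval_lebesgue_integrable lborel (ereal a) (ereal b) g"
proof -
  have "set_integrable lborel {min a b..max a b} g" using assms by (simp add: loc_int_def)
  then have "set_integrable lborel {min a b<..<max a b} g"
    by (rule set_integrable_subset) auto
  then show ?thesis
    by (auto simp: interval_lebesgue_integrable_def min_def max_def split: if_splits)
qed

lemma fubini_step:
  fixes g q :: "real \<Rightarrow> real" and M :: real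
  assumes g: "loc_int g" and q: "\<And>x. isCont q x"
  defines "F \<equiv> \<lambda>x t. if -M \<le> t \<and> t \<le> x \<and> x \<le> M then g t * q x else 0"
  shows "(LINT x|lborel. LINT t|lborel. F x t) = (LINT t|lborel. LINT x|lborel. F x t)"
    and "integrable lborel (\<lambda>x. LINT t|lborel. F x t)"
proof -
  have [measurable]: "g \<in> borel_measurable borel" using loc_int_meas[OF g] by simp
  have [measurable]: "q \<in> borel_measurable borel" by (rule cont_meas[OF q])
  obtain B where B: "\<And>x. x \<in> {-M..M} \<Longrightarrow> \<bar>q x\<bar> \<le> B" using cont_bounded[OF q] by blast
  define P where "P = (\<lambda>(x::real, t::real). B * indicator {-M..M} x * (indicator {-M..M} t * \<bar>g t\<bar>))"
  have intg: "integrable lborel (\<lambda>t. indicator {-M..M} t * \<bar>g t\<bar>)"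
    using loc_int_kN[OF g, of "-M" M]
    by (metis (no_types, lifting) Bochner_Integration.integrable_cong abs_mult integrable_abs abs_indicator)
  have Pint: "integrable (lborel \<Otimes>\<^sub>M lborel) P"
  proof (rule lborel_pair.Fubini_integrable)
    show "P \<in> borel_measurable (lborel \<Otimes>\<^sub>M lborel)" unfolding P_def by measurable
    show "AE x in lborel. integrable lborel (\<lambda>y. P (x, y))"
      unfolding P_def using intg by auto
    have "(\<lambda>x. LINT y|lborel. norm (P (x, y))) = (\<lambda>x. indicator {-M..M} x * (\<bar>B\<bar> * (LINT y|lborel. indicator {-M..M} y * \<bar>g y\<bar>)))"
      unfolding P_def by (auto simp: abs_mult fun_eq_iff indicator_def)
    moreover have "integrable lborel (\<lambda>x. indicator {-M..M} x * (\<bar>B\<bar> * (LINT y|lborel. indicator {-M..M} y * \<bar>g y\<bar>)))"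
      by (intro integrable_mult_left integrable_real_indicator) (auto simp: emeasure_lborel_Icc_eq)
    ultimately show "integrable lborel (\<lambda>x. LINT y|lborel. norm (P (x, y)))"
      by (simp only:)
  qed
  have Fint: "integrable (lborel \<Otimes>\<^sub>M lborel) (case_prod F)"
  proof (rule Bochner_Integration.integrable_bound[OF Pint])
    show "case_prod F \<in> borel_measurable (lborel \<Otimes>\<^sub>M lborel)" unfolding F_def by measurable
    show "AE p in lborel \<Otimes>\<^sub>M lborel. norm (case_prod F p) \<le> norm (P p)"
    proof (intro AE_I2)
      fix p :: "real \<times> real"
      obtain x t where p: "p = (x, t)" by fastforce
      show "norm (case_prod F p) \<le> norm (P p)"
      proof (cases "-M \<le> t \<and> t \<le> x \<and> x \<le> M")
        case True
        then have "\<bar>q x\<bar> \<le> B" using B by auto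
        then have "\<bar>g t\<bar> * \<bar>q x\<bar> \<le> \<bar>g t\<bar> * B" by (intro mult_left_mono) auto
        moreover have "0 \<le> B" using \<open>\<bar>q x\<bar> \<le> B\<close> by linarith
        ultimately show ?thesis using True by (auto simp: p F_def P_def abs_mult mult_ac)
      qed (auto simp: p F_def P_def)
    qed
  qed
  show "(LINT x|lborel. LINT t|lborel. F x t) = (LINT t|lborel. LINT x|lborel. F x t)"
    using lborel_pair.Fubini_integral[OF Fint] by simp
  show "integrable lborel (\<lambda>x. LINT t|lborel. F x t)"
    using lborel_pair.integrable_fst'[OF Fint] by simp
qed


lemma lbint_split:
  fixes a b c :: real
  assumes "loc_int g"
  shows "(LBINT t=a..b. g t) + (LBINT t=b..c. g t) = (LBINT t=a..c. g t)"
  by (rule interval_integral_sum) (use loc_int_interval[OF assms, of "min a (min b c)" "max a (max b c)"] in simp)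

lemma smooth_FTC:
  fixes a b :: real
  assumes "smooth \<phi>"
  shows "(LBINT x=a..b. deriv \<phi> x) = \<phi> b - \<phi> a"
proof (rule interval_integral_FTC_finite)
  show "continuous_on {min a b..max a b} (deriv \<phi>)"
    by (intro continuous_at_imp_continuous_on ballI smooth_isCont smooth_deriv assms)
  fix x
  have "(\<phi> has_real_derivative deriv \<phi> x) (at x)" using smooth_hasD[OF assms, of 0 x] by simp
  then show "(\<phi> has_vector_derivative deriv \<phi> x) (at x within {min a b..max a b})"
    by (simp add: has_real_derivative_iff_has_vector_derivative[symmetric] has_field_derivative_at_within)
qed

lemma prim_weak:
  fixes a :: real
  assumes g: "loc_int g" and phi: "test_fun \<phi>"
  shows "(LINT x|lborel. (LBINT t=a..x. g t) * deriv \<phi> x) = - (LINT x|lborel. g x * \<phi> x)"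
proof -
  obtain R where R: "\<forall>x. R < \<bar>x\<bar> \<longrightarrow> \<phi> x = 0" and sm: "smooth \<phi>" using phi test_fun_iff by blast
  define q where "q = deriv \<phi>"
  have qc: "isCont q x" for x unfolding q_def by (intro smooth_isCont smooth_deriv sm)
  have q0: "q x = 0" if "R < \<bar>x\<bar>" for x unfolding q_def using test_deriv_zero[OF R that] .
  define M where "M = max R \<bar>a\<bar> + 1"
  have M: "M > R" "M > \<bar>a\<bar>" "M > 0" unfolding M_def by auto
  define F where "F = (\<lambda>x t. if -M \<le> t \<and> t \<le> x \<and> x \<le> M then g t * q x else 0)"
  note fub = fubini_step[OF g qc, of M, folded F_def]
  define C where "C = (LBINT t=-M..a. g t)"
  obtain B where B: "\<And>x. x \<in> {-M..M} \<Longrightarrow> \<bar>q x\<bar> \<le> B" using cont_bounded[OF qc] by blast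
  have qB: "\<bar>q x\<bar> \<le> B" for x using B[of x] q0[of x] M B[of 0] by (cases "x \<in> {-M..M}") auto
  have qint: "integrable lborel (\<lambda>x. C * q x)"
    by (rule int_h_bump[OF loc_int_const qc qB, of "-M" M]) (use q0 M in auto)
  have q_int0: "(LINT x|lborel. q x) = 0"
  proof -
    have "(LINT x|lborel. q x) = (LINT x|lborel. indicator {-M..M} x * q x)"
    proof (rule Bochner_Integration.integral_cong)
      fix x
      show "q x = indicator {-M..M} x * q x"
      proof (cases "x \<in> {-M..M}")
        case False
        then have "R < \<bar>x\<bar>" using M by (auto simp: abs_if)
        then show ?thesis using q0 by simp
      qed simp
    qed simp
    also have "\<dots> = (LBINT x=-M..M. q x)"
      using M by (simp add: interval_integral_Icc set_lebesgue_integral_def)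
    also have "\<dots> = \<phi> M - \<phi> (-M)" unfolding q_def using smooth_FTC[OF sm] by simp
    also have "\<dots> = 0" using R M by simp
    finally show ?thesis .
  qed
  have pt1: "(LBINT t=a..x. g t) * q x = (LINT t|lborel. F x t) - C * q x" for x
  proof (cases "x \<in> {-M..M}")
    case True
    have "(LBINT t=a..x. g t) = (LBINT t=-M..x. g t) - C"
      using lbint_split[OF g, of "-M" a x] by (simp add: C_def)
    moreover have "(LBINT t=-M..x. g t) = (LINT t|lborel. indicator {-M..x} t * g t)"
      using True by (simp add: interval_integral_Icc set_lebesgue_integral_def)
    moreover have "(LINT t|lborel. F x t) = (LINT t|lborel. indicator {-M..x} t * g t) * q x"
      by (subst integral_mult_left_zero[symmetric], rule Bochner_Integration.integral_cong)
         (use True in \<open>auto simp: F_def indicator_def\<close>)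
    ultimately show ?thesis by (simp add: algebra_simps) (metis distrib_left mult.commute)
  next
    case False
    then have "q x = 0" using q0 M by auto
    moreover have "F x t = 0" for t using False by (auto simp: F_def)
    ultimately show ?thesis by simp
  qed
  have pt2: "(LINT x|lborel. F x t) = - (g t * \<phi> t)" for t
  proof (cases "t \<in> {-M..M}")
    case True
    have "(LINT x|lborel. F x t) = g t * (LINT x|lborel. indicator {t..M} x * q x)"
      by (subst integral_mult_right_zero[symmetric], rule Bochner_Integration.integral_cong)
         (use True in \<open>auto simp: F_def indicator_def\<close>)
    also have "(LINT x|lborel. indicator {t..M} x * q x) = (LBINT x=t..M. q x)"
      using True by (simp add: interval_integral_Icc set_lebesgue_integral_def)
    also have "\<dots> = \<phi> M - \<phi> t" unfolding q_def using smooth_FTC[OF sm] by simp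
    also have "\<phi> M = 0" using R M by simp
    finally show ?thesis by simp
  next
    case False
    then have "\<phi> t = 0" using R M by auto
    moreover have "F x t = 0" for x using False by (auto simp: F_def)
    ultimately show ?thesis by simp
  qed
  have "(LINT x|lborel. (LBINT t=a..x. g t) * deriv \<phi> x) = (LINT x|lborel. (LINT t|lborel. F x t) - C * q x)"
    unfolding q_def[symmetric] pt1 ..
  also have "\<dots> = (LINT x|lborel. LINT t|lborel. F x t) - (LINT x|lborel. C * q x)"
    by (intro Bochner_Integration.integral_diff qint) (use fub(2) in \<open>simp add: F_def\<close>)
  also have "(LINT x|lborel. C * q x) = 0" using q_int0 by simp
  also have "(LINT x|lborel. LINT t|lborel. F x t) = (LINT t|lborel. - (g t * \<phi> t))"
  proof -
    have "(LINT x|lborel. LINT t|lborel. F x t) = (LINT t|lborel. LINT x|lborel. F x t)"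
      using fub(1) by (simp add: F_def)
    then show ?thesis by (simp only: pt2)
  qed
  finally show ?thesis by simp
qed


lemma mk_test:
  fixes A C :: real
  assumes sm: "smooth g" and supp: "\<And>x. x \<notin> {A..C} \<Longrightarrow> g x = 0"
    and int: "integrable lborel g" and z: "(LINT x|lborel. g x) = 0"
  shows "test_fun (\<lambda>x. LBINT t=A..x. g t)" "deriv (\<lambda>x. LBINT t=A..x. g t) = g"
proof -
  have d: "((\<lambda>x. LBINT t=A..x. g t) has_real_derivative g x) (at x)" for x
    by (rule prim_deriv) (rule smooth_isCont[OF sm])
  show "deriv (\<lambda>x. LBINT t=A..x. g t) = g" by (rule smooth_primitive(2)[OF sm d])
  have s: "smooth (\<lambda>x. LBINT t=A..x. g t)" by (rule smooth_primitive(1)[OF sm d])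
  have "(LBINT t=A..x. g t) = 0" if x: "\<bar>A\<bar> + \<bar>C\<bar> + 1 < \<bar>x\<bar>" for x
  proof (cases "x < A")
    case True
    have "(LBINT t=A..x. g t) = - (LBINT t=x..A. g t)" by (rule interval_integral_endpoints_reverse)
    also have "(LBINT t=x..A. g t) = (LBINT t=x..A. 0)"
      by (rule interval_integral_cong) (use True in \<open>auto simp: einterval_iff intro!: supp\<close>)
    finally show ?thesis by simp
  next
    case False
    then have xC: "x > C" "A \<le> x" using x by (auto simp: abs_if split: if_splits)
    have "(LBINT t=A..x. g t) = (LINT t|lborel. indicator {A..x} t * g t)"
      using xC by (simp add: interval_integral_Icc set_lebesgue_integral_def)
    also have "\<dots> = (LINT t|lborel. g t)"
    proof (rule Bochner_Integration.integral_cong)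
      fix t show "indicator {A..x} t * g t = g t"
        using supp[of t] xC by (cases "t \<in> {A..x}") auto
    qed simp
    finally show ?thesis using z by simp
  qed
  then show "test_fun (\<lambda>x. LBINT t=A..x. g t)"
    unfolding test_fun_iff using s by blast
qed

lemma psi_integrable:
  assumes "loc_int h" "a \<le> b" "n \<ge> 1"
  shows "integrable lborel (\<lambda>x. h x * psi n a b x)"
  by (rule int_h_bump[OF assms(1) psi_cont psi_bound, of "a-1" "b+1"]) (use psi_supp assms in auto)

lemma DBR:
  assumes h: "loc_int h" and hyp: "\<And>\<phi>. test_fun \<phi> \<Longrightarrow> (LINT x|lborel. h x * deriv \<phi> x) = 0"
  shows "AE x in lborel. h x = (LBINT t=0..1. h t)"
proof -
  define H01 where "H01 = (LBINT t=0..1. h t)"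
  have key: "(LBINT t=a..b. h t) = (b - a) * H01" if ab: "a \<le> b" for a b :: real
  proof -
    define n where "n m = real (Suc m)" for m
    define I01 where "I01 = (\<lambda>m. (LINT x|lborel. psi (n m) 0 1 x))"
    define Iab where "Iab = (\<lambda>m. (LINT x|lborel. psi (n m) a b x))"
    define A01 where "A01 = (\<lambda>m. (LINT x|lborel. h x * psi (n m) 0 1 x))"
    define Aab where "Aab = (\<lambda>m. (LINT x|lborel. h x * psi (n m) a b x))"
    have n1: "n m \<ge> 1" for m by (simp add: n_def)
    have eq: "I01 m * Aab m - Iab m * A01 m = 0" for m
    proof -
      define g where "g x = I01 m * psi (n m) a b x - Iab m * psi (n m) 0 1 x" for x
      have sm: "smooth g" unfolding g_def
        by (intro smooth_minus smooth_cmult smooth_psi)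
      have supp: "g x = 0" if "x \<notin> {min a 0 - 1..max b 1 + 1}" for x
      proof -
        have "x \<notin> {a-1..b+1}" "x \<notin> {0-1..1+1}" using that by (auto simp: min_def max_def split: if_splits)
        then show ?thesis using psi_supp[OF ab n1, of x m] psi_supp[of 0 1 "n m" x] n1[of m]
          by (simp add: g_def)
      qed
      have ip1: "integrable lborel (psi (n m) a b)"
        using psi_integrable[OF loc_int_const ab n1, of 1 m] by simp
      have ip2: "integrable lborel (psi (n m) 0 1)"
        using psi_integrable[OF loc_int_const _ n1, of 0 1 1 m] by simp
      have int: "integrable lborel g" unfolding g_def using ip1 ip2 by auto
      have z: "(LINT x|lborel. g x) = 0" unfolding g_def
        using ip1 ip2 by (simp add: I01_def Iab_def)
      note T = mk_test[of g "min a 0 - 1" "max b 1 + 1", OF sm supp int z]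
      have "(LINT x|lborel. h x * g x) = 0" using hyp[OF T(1)] T(2) by simp
      moreover have "(LINT x|lborel. h x * g x) = I01 m * Aab m - Iab m * A01 m"
      proof -
        have "(LINT x|lborel. h x * g x) = (LINT x|lborel. I01 m * (h x * psi (n m) a b x) - Iab m * (h x * psi (n m) 0 1 x))"
          by (simp add: g_def algebra_simps)
        also have "\<dots> = I01 m * Aab m - Iab m * A01 m"
          using psi_integrable[OF h ab n1, of m] psi_integrable[OF h _ n1, of 0 1 m]
          by (simp add: Aab_def A01_def)
        finally show ?thesis .
      qed
      ultimately show ?thesis by simp
    qed
    have l1: "I01 \<longlonglongrightarrow> 1"
      using psi_int_lim[OF loc_int_const, of 0 1 1] by (simp add: I01_def n_def)
    have l2: "Iab \<longlonglongrightarrow> b - a"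
      using psi_int_lim[OF loc_int_const ab, of 1] by (simp add: Iab_def n_def)
    have l3: "A01 \<longlonglongrightarrow> H01"
      using psi_int_lim[OF h, of 0 1] by (simp add: A01_def n_def H01_def zero_ereal_def one_ereal_def)
    have l4: "Aab \<longlonglongrightarrow> (LBINT t=a..b. h t)"
      using psi_int_lim[OF h ab] by (simp add: Aab_def n_def)
    have "(\<lambda>m. I01 m * Aab m - Iab m * A01 m) \<longlonglongrightarrow> 1 * (LBINT t=a..b. h t) - (b - a) * H01"
      by (intro tendsto_intros l1 l2 l3 l4)
    moreover have "(\<lambda>m. I01 m * Aab m - Iab m * A01 m) \<longlonglongrightarrow> 0" using eq by simp
    ultimately have "1 * (LBINT t=a..b. h t) - (b - a) * H01 = 0" using LIMSEQ_unique by blast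
    then show ?thesis by simp
  qed
  have lk: "loc_int (\<lambda>x. h x - H01)"
    using h loc_int_const[of H01] unfolding loc_int_def by (auto intro: set_integral_diff(1))
  have zz: "(LBINT t=a..b. h t - H01) = 0" if ab: "a \<le> b" for a b :: real
  proof -
    have "(LBINT t=a..b. h t - H01) = (LBINT t=a..b. h t) - (LBINT t=a..b. H01)"
      by (rule interval_lebesgue_integral_diff(2)) (auto intro: loc_int_interval[OF h])
    then show "(LBINT t=a..b. h t - H01) = 0" using key[OF ab] by simp
  qed
  have "AE x in lborel. h x - H01 = 0" by (rule Z[OF lk]) (rule zz, simp)
  then show ?thesis by (simp add: H01_def)
qed


lemma loc_int_cont:
  assumes "\<And>x. isCont f x" shows "loc_int f"
proof -
  have "integrable lborel (\<lambda>x. indicator {a..b} x *\<^sub>R f x)" for a b :: real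
    by (rule borel_integrable_compact) (auto intro!: continuous_at_imp_continuous_on assms)
  then show ?thesis by (simp add: loc_int_def set_integrable_def)
qed

lemma G_cont:
  fixes c :: real
  assumes g: "loc_int g"
  shows "isCont (\<lambda>x::real. LBINT t=c..x. g t) x"
proof -
  define N where "N = \<bar>x\<bar> + \<bar>c\<bar> + 1"
  have si: "set_integrable lborel {-N..N} g" using g by (simp add: loc_int_def)
  have gi: "g integrable_on {-N..N}" by (rule set_borel_integral_eq_integral(1)[OF si])
  have eq: "(LBINT t=c..y. g t) = integral {-N..y} g - (LBINT t=-N..c. g t)" if y: "y \<in> {-N..N}" for y
  proof -
    have "(LBINT t=-N..c. g t) + (LBINT t=c..y. g t) = (LBINT t=-N..y. g t)" by (rule lbint_split[OF g])
    moreover have "(LBINT t=-N..y. g t) = integral {-N..y} g"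
      using y g by (intro interval_integral_eq_integral) (auto simp: loc_int_def)
    ultimately show ?thesis by simp
  qed
  have "continuous_on {-N..N} (\<lambda>y::real. integral {-N..y} g - (LBINT t=-N..c. g t))"
    by (intro continuous_intros indefinite_integral_continuous_1 gi)
  then have "continuous_on {-N..N} (\<lambda>y::real. LBINT t=c..y. g t)"
    by (rule continuous_on_eq) (use eq in auto)
  moreover have "x \<in> interior {-N..N}" unfolding N_def by auto
  ultimately show ?thesis by (rule continuous_on_interior)
qed

lemma test_fun_deriv:
  assumes "test_fun \<phi>" shows "test_fun (deriv \<phi>)"
proof -
  obtain R where R: "\<forall>x. R < \<bar>x\<bar> \<longrightarrow> \<phi> x = 0" and sm: "smooth \<phi>" using assms test_fun_iff by blast
  show ?thesis unfolding test_fun_iff using smooth_deriv[OF sm] test_deriv_zero[OF R] by blast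
qed

lemma test_props:
  assumes "test_fun \<phi>"
  obtains R B where "\<And>x. isCont \<phi> x" "\<And>x. \<bar>\<phi> x\<bar> \<le> B" "\<And>x. x \<notin> {-R..R} \<Longrightarrow> \<phi> x = 0"
proof -
  obtain R where R: "\<forall>x. R < \<bar>x\<bar> \<longrightarrow> \<phi> x = 0" and sm: "smooth \<phi>" using assms test_fun_iff by blast
  have c: "isCont \<phi> x" for x by (rule smooth_isCont[OF sm])
  obtain B where B: "\<And>x. x \<in> {-R..R} \<Longrightarrow> \<bar>\<phi> x\<bar> \<le> B" using cont_bounded[OF c] by blast
  have z: "\<phi> x = 0" if "x \<notin> {-R..R}" for x using R that by (auto simp: abs_if)
  have bnd: "\<bar>\<phi> x\<bar> \<le> \<bar>B\<bar>" for x using B[of x] z[of x] by (cases "x \<in> {-R..R}") auto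
  show ?thesis
    apply (rule that[of "\<bar>B\<bar>" R])
      apply (rule c)
     apply (rule bnd)
    apply (erule z)
    done
qed

lemma int_test:
  assumes "loc_int h" "test_fun \<phi>"
  shows "integrable lborel (\<lambda>x. h x * \<phi> x)"
proof -
  obtain R B where "\<And>x. isCont \<phi> x" "\<And>x. \<bar>\<phi> x\<bar> \<le> B" "\<And>x. x \<notin> {-R..R} \<Longrightarrow> \<phi> x = 0"
    using test_props[OF assms(2)] by metis
  then show ?thesis by (intro int_h_bump[OF assms(1)])
qed

lemma weak_rep:
  assumes f: "loc_int f" and g: "loc_int g"
    and w: "\<And>\<phi>. test_fun \<phi> \<Longrightarrow> (LINT x|lborel. f x * deriv \<phi> x) = - (LINT x|lborel. g x * \<phi> x)"
  shows "\<exists>c. AE x in lborel. f x = c + (LBINT t=(0::real)..x. g t)"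
proof -
  define G where "G x = (LBINT t=(0::real)..x. g t)" for x :: real
  have Gc: "isCont G x" for x unfolding G_def by (rule G_cont[OF g])
  have lG: "loc_int G" by (rule loc_int_cont[OF Gc])
  have lh: "loc_int (\<lambda>x. f x - G x)"
    using f lG unfolding loc_int_def by (auto intro: set_integral_diff(1))
  have "AE x in lborel. f x - G x = (LBINT t=0..1. f t - G t)"
  proof (rule DBR[OF lh])
    fix \<phi> :: "real \<Rightarrow> real" assume phi: "test_fun \<phi>"
    have d: "test_fun (deriv \<phi>)" by (rule test_fun_deriv[OF phi])
    have "(LINT x|lborel. (f x - G x) * deriv \<phi> x) = (LINT x|lborel. f x * deriv \<phi> x) - (LINT x|lborel. G x * deriv \<phi> x)"
      using int_test[OF f d] int_test[OF lG d] by (simp add: left_diff_distrib)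
    also have "(LINT x|lborel. G x * deriv \<phi> x) = - (LINT x|lborel. g x * \<phi> x)"
      unfolding G_def by (rule prim_weak[OF g phi])
    finally show "(LINT x|lborel. (f x - G x) * deriv \<phi> x) = 0" using w[OF phi] by simp
  qed
  then have "AE x in lborel. f x = (LBINT t=0..1. f t - G t) + G x"
    by eventually_elim simp
  then show ?thesis unfolding G_def by blast
qed

lemma cont_AE_eq:
  fixes f g :: "real \<Rightarrow> real"
  assumes "\<And>x. isCont f x" "\<And>x. isCont g x" "AE x in lborel. f x = g x"
  shows "f x = g x"
proof (rule ccontr)
  assume ne: "f x \<noteq> g x"
  have "isCont (\<lambda>y. f y - g y) x" using assms by (intro continuous_intros)
  moreover have "f x - g x \<noteq> 0" using ne by simp
  ultimately obtain e where e: "e > 0" "\<And>y. dist x y < e \<Longrightarrow> f y - g y \<noteq> 0"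
    using continuous_at_avoid[of x "\<lambda>y. f y - g y" 0] by blast
  have sub: "{x-e<..<x+e} \<subseteq> {y \<in> space lborel. \<not> f y = g y}"
  proof
    fix y assume "y \<in> {x-e<..<x+e}"
    then have "dist x y < e" by (auto simp: dist_real_def abs_if)
    then show "y \<in> {y \<in> space lborel. \<not> f y = g y}" using e(2)[of y] by auto
  qed
  from assms(3) obtain N where N: "{y \<in> space lborel. \<not> f y = g y} \<subseteq> N" "emeasure lborel N = 0" "N \<in> sets lborel"
    by (rule AE_E)
  have "emeasure lborel {x-e<..<x+e} \<le> emeasure lborel N"
    using sub N by (intro emeasure_mono) auto
  then show False using N e by simp
qed

lemma weak_uniq:
  assumes "weak_deriv f g1" "weak_deriv f g2"
  shows "AE x in lborel. g1 x = g2 x"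
proof -
  have lf: "loc_int f" and l1: "loc_int g1" and l2: "loc_int g2" using assms by (auto simp: weak_deriv_def)
  obtain c1 where c1: "AE x in lborel. f x = c1 + (LBINT t=(0::real)..x. g1 t)"
    using weak_rep[OF lf l1] assms(1) unfolding weak_deriv_def by blast
  obtain c2 where c2: "AE x in lborel. f x = c2 + (LBINT t=(0::real)..x. g2 t)"
    using weak_rep[OF lf l2] assms(2) unfolding weak_deriv_def by blast
  have eq: "c1 + (LBINT t=(0::real)..x. g1 t) = c2 + (LBINT t=(0::real)..x. g2 t)" for x :: real
  proof (rule cont_AE_eq[where f="\<lambda>x::real. c1 + (LBINT t=(0::real)..x. g1 t)" and g="\<lambda>x::real. c2 + (LBINT t=(0::real)..x. g2 t)"])
    show "isCont (\<lambda>x::real. c1 + (LBINT t=(0::real)..x. g1 t)) y" for y :: real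
      using G_cont[OF l1, of y 0] by (intro continuous_intros) auto
    show "isCont (\<lambda>x::real. c2 + (LBINT t=(0::real)..x. g2 t)) y" for y :: real
      using G_cont[OF l2, of y 0] by (intro continuous_intros) auto
    show "AE x in lborel. c1 + (LBINT t=(0::real)..x. g1 t) = c2 + (LBINT t=(0::real)..x. g2 t)"
      using c1 c2 by eventually_elim simp
  qed
  then have "c1 = c2" using eq[of 0] by simp
  then have eq2: "(LBINT t=(0::real)..x. g1 t) = (LBINT t=(0::real)..x. g2 t)" for x :: real using eq[of x] by simp
  have l12: "loc_int (\<lambda>x. g1 x - g2 x)"
    using l1 l2 unfolding loc_int_def by (auto intro: set_integral_diff(1))
  have zz: "(LBINT t=a..b. g1 t - g2 t) = 0" if "a \<le> b" for a b :: real
  proof -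
    have s1: "(LBINT t=a..b. g1 t) = (LBINT t=(0::real)..b. g1 t) - (LBINT t=(0::real)..a. g1 t)"
      using lbint_split[OF l1, of a 0 b] interval_integral_endpoints_reverse[of a 0 g1] by (simp add: zero_ereal_def)
    have s2: "(LBINT t=a..b. g2 t) = (LBINT t=(0::real)..b. g2 t) - (LBINT t=(0::real)..a. g2 t)"
      using lbint_split[OF l2, of a 0 b] interval_integral_endpoints_reverse[of a 0 g2] by (simp add: zero_ereal_def)
    have "(LBINT t=a..b. g1 t - g2 t) = (LBINT t=a..b. g1 t) - (LBINT t=a..b. g2 t)"
      by (rule interval_lebesgue_integral_diff(2)) (auto intro: loc_int_interval l1 l2)
    then show "(LBINT t=a..b. g1 t - g2 t) = 0" using s1 s2 eq2 by simp
  qed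
  have "AE x in lborel. g1 x - g2 x = 0" by (rule Z[OF l12]) (rule zz, simp)
  then show ?thesis by auto
qed


lemma set_le_full:
  fixes w :: "real \<Rightarrow> real"
  assumes "integrable lborel w" "\<And>t. w t \<ge> 0" "S \<in> sets borel"
  shows "(LINT t:S|lborel. w t) \<le> (LINT t|lborel. w t)"
  unfolding set_lebesgue_integral_def
  using assms by (intro integral_mono integrable_mult_indicator) (auto simp: indicator_def)

lemma set_int_Icc:
  fixes w :: "real \<Rightarrow> real" and a b :: real
  shows "integrable lborel w \<Longrightarrow> set_integrable lborel {a..b} w"
  unfolding set_integrable_def by (rule integrable_mult_indicator) auto

lemma seq_small:
  fixes w :: "real \<Rightarrow> real"
  assumes w: "integrable lborel w" "\<And>t. w t \<ge> 0" and N: "N \<ge> 1" and e: "e > 0"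
  shows "\<exists>R\<ge>N. R * w R < e"
proof (rule ccontr)
  assume "\<not> (\<exists>R\<ge>N. R * w R < e)"
  then have ge: "e / R \<le> w R" if "R \<ge> N" for R
    using that N by (auto simp: field_simps not_less)
  define A where "A = (LINT t|lborel. w t)"
  define M where "M = N * exp ((A + 1) / e)"
  have A0: "A \<ge> 0" unfolding A_def using w by auto
  have "exp ((A + 1) / e) \<ge> 1" using A0 e by auto
  then have NM: "N \<le> M" unfolding M_def using N by (metis mult_le_cancel_left1 not_le order_trans zero_le_one less_le_not_le)
  have Npos: "N > 0" using N by simp
  have "(LBINT t=N..M. e / t) = e * ln M - e * ln N"
  proof (rule interval_integral_FTC_finite)
    show "continuous_on {min N M..max N M} (\<lambda>t. e / t)"
      using Npos NM by (intro continuous_intros) auto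
    fix t assume "min N M \<le> t" "t \<le> max N M"
    then have t: "t > 0" using Npos NM by auto
    show "((\<lambda>t. e * ln t) has_vector_derivative e / t) (at t within {min N M..max N M})"
      unfolding has_real_derivative_iff_has_vector_derivative[symmetric]
      using t by (auto intro!: derivative_eq_intros simp: field_simps)
  qed
  also have "\<dots> = A + 1"
    unfolding M_def using Npos e by (simp add: ln_mult field_simps)
  finally have eq: "(LBINT t=N..M. e / t) = A + 1" .
  have "(LBINT t=N..M. e / t) = (LINT t:{N..M}|lborel. e / t)" using NM by (simp add: interval_integral_Icc)
  also have "\<dots> \<le> (LINT t:{N..M}|lborel. w t)"
  proof (rule set_integral_mono)
    show "set_integrable lborel {N..M} (\<lambda>t. e / t)"
      unfolding set_integrable_def using Npos
      by (intro borel_integrable_compact[unfolded real_scaleR_def]) (auto intro!: continuous_intros)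
    show "set_integrable lborel {N..M} w" by (rule set_int_Icc[OF w(1)])
    show "e / t \<le> w t" if "t \<in> {N..M}" for t using ge that by auto
  qed
  also have "\<dots> \<le> A" unfolding A_def by (rule set_le_full) (use w in auto)
  finally show False using eq by simp
qed

lemma abs_le_sq: "\<bar>a::real\<bar> \<le> 1 + a\<^sup>2"
proof -
  have "0 \<le> (\<bar>a\<bar> - 1)\<^sup>2" by simp
  then have "0 \<le> \<bar>a\<bar> * \<bar>a\<bar> - 2 * \<bar>a\<bar> + 1" by (simp add: power2_eq_square algebra_simps)
  moreover have "\<bar>a\<bar> * \<bar>a\<bar> = a\<^sup>2" by (simp add: power2_eq_square)
  moreover have "a\<^sup>2 \<ge> 0" by simp
  ultimately show ?thesis by linarith
qed

lemma bounded_H1: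
  fixes f g :: "real \<Rightarrow> real"
  assumes fc: "\<And>x. isCont f x" and fg: "\<And>x y. x \<le> y \<Longrightarrow> f y - f x = (LBINT t=x..y. g t)"
    and f2: "integrable lborel (\<lambda>x. (f x)\<^sup>2)" and g2: "integrable lborel (\<lambda>x. (g x)\<^sup>2)"
    and gm: "g \<in> borel_measurable borel"
  shows "\<exists>K. \<forall>x. \<bar>f x\<bar> \<le> K"
proof -
  define A where "A = (LINT t|lborel. (f t)\<^sup>2)"
  define B where "B = (LINT t|lborel. (g t)\<^sup>2)"
  have "\<bar>f x\<bar> \<le> 2 + A + B" for x
  proof -
    have "continuous_on {x..x+1} (\<lambda>t. (f t)\<^sup>2)" by (intro continuous_intros continuous_at_imp_continuous_on ballI fc)
    then obtain y where y: "y \<in> {x..x+1}" "\<And>t. t \<in> {x..x+1} \<Longrightarrow> (f y)\<^sup>2 \<le> (f t)\<^sup>2"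
      using continuous_attains_inf[of "{x..x+1}" "\<lambda>t. (f t)\<^sup>2"] by auto
    have fm: "f \<in> borel_measurable borel" by (rule cont_meas[OF fc])
    have "(f y)\<^sup>2 = (LINT t:{x..x+1}|lborel. (f y)\<^sup>2)"
      by (simp add: set_integral_const emeasure_lborel_Icc_eq measure_def)
    also have "\<dots> \<le> (LINT t:{x..x+1}|lborel. (f t)\<^sup>2)"
    proof (rule set_integral_mono)
      show "set_integrable lborel {x..x+1} (\<lambda>t. (f y)\<^sup>2)"
        unfolding set_integrable_def real_scaleR_def
        by (intro integrable_mult_left integrable_real_indicator) (auto simp: emeasure_lborel_Icc_eq)
      show "set_integrable lborel {x..x+1} (\<lambda>t. (f t)\<^sup>2)" by (rule set_int_Icc[OF f2])
    qed (rule y(2))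
    also have "\<dots> \<le> A" unfolding A_def by (rule set_le_full[OF f2]) auto
    finally have fyA: "(f y)\<^sup>2 \<le> A" .
    have fy: "\<bar>f y\<bar> \<le> 1 + A"
    proof -
      have "\<bar>f y\<bar> \<le> 1 + (f y)\<^sup>2"
        by (rule abs_le_sq)
      then show ?thesis using fyA by linarith
    qed
    have gi: "set_integrable lborel {x..y} g"
    proof -
      have "integrable lborel (\<lambda>t. indicator {x..y} t * g t)"
      proof (rule Bochner_Integration.integrable_bound)
        show "integrable lborel (\<lambda>t. indicator {x..y} t + (g t)\<^sup>2)"
          using g2 by (intro Bochner_Integration.integrable_add integrable_real_indicator) (auto simp: emeasure_lborel_Icc_eq)
        show "(\<lambda>t. indicator {x..y} t * g t) \<in> borel_measurable lborel" using gm by measurable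
        show "AE t in lborel. norm (indicator {x..y} t * g t) \<le> norm (indicator {x..y} t + (g t)\<^sup>2)"
        proof (intro AE_I2)
          fix t
          have "\<bar>g t\<bar> \<le> 1 + (g t)\<^sup>2"
            by (rule abs_le_sq)
          then show "norm (indicator {x..y} t * g t) \<le> norm (indicator {x..y} t + (g t)\<^sup>2)"
            by (auto simp: indicator_def)
        qed
      qed
      then show ?thesis by (simp add: set_integrable_def)
    qed
    have "\<bar>f y - f x\<bar> = \<bar>LINT t:{x..y}|lborel. g t\<bar>" using fg[of x y] y by (simp add: interval_integral_Icc)
    also have "\<dots> \<le> (LINT t:{x..y}|lborel. \<bar>g t\<bar>)"
      using set_integral_norm_bound[OF gi] by simp
    also have "\<dots> \<le> (LINT t:{x..y}|lborel. indicator {x..y} t + (g t)\<^sup>2)"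
    proof (rule set_integral_mono)
      show "set_integrable lborel {x..y} (\<lambda>t. \<bar>g t\<bar>)" using gi
        by (simp add: set_integrable_def abs_mult[symmetric] del: abs_mult)
          (metis (no_types, lifting) Bochner_Integration.integrable_cong abs_mult abs_indicator integrable_abs)
      show "set_integrable lborel {x..y} (\<lambda>t. indicator {x..y} t + (g t)\<^sup>2)"
        using g2 unfolding set_integrable_def
        by (intro integrable_mult_indicator Bochner_Integration.integrable_add integrable_real_indicator) (auto simp: emeasure_lborel_Icc_eq)
      fix t assume "t \<in> {x..y}"
      have "\<bar>g t\<bar> \<le> 1 + (g t)\<^sup>2"
        by (rule abs_le_sq)
      then show "\<bar>g t\<bar> \<le> indicator {x..y} t + (g t)\<^sup>2" using \<open>t \<in> {x..y}\<close> by simp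
    qed
    also have "\<dots> \<le> (LINT t|lborel. indicator {x..y} t + (g t)\<^sup>2)"
      by (rule set_le_full) (use g2 in \<open>auto intro!: Bochner_Integration.integrable_add integrable_real_indicator simp: emeasure_lborel_Icc_eq\<close>)
    also have "\<dots> = (y - x) + B"
      using g2 y unfolding B_def
      by (subst Bochner_Integration.integral_add) (auto intro!: integrable_real_indicator simp: emeasure_lborel_Icc_eq)
    also have "\<dots> \<le> 1 + B" using y by auto
    finally have "\<bar>f y - f x\<bar> \<le> 1 + B" .
    then show ?thesis using fy by linarith
  qed
  then show ?thesis by blast
qed


lemma prod_le_sq: "\<bar>a * b\<bar> \<le> a\<^sup>2 + (b::real)\<^sup>2"
proof -
  have "0 \<le> (\<bar>a\<bar> - \<bar>b\<bar>)\<^sup>2" by simp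
  then have "2 * (\<bar>a\<bar> * \<bar>b\<bar>) \<le> \<bar>a\<bar> * \<bar>a\<bar> + \<bar>b\<bar> * \<bar>b\<bar>" by (simp add: power2_eq_square algebra_simps)
  moreover have "\<bar>a\<bar> * \<bar>a\<bar> = a\<^sup>2" "\<bar>b\<bar> * \<bar>b\<bar> = b\<^sup>2" by (simp_all add: power2_eq_square)
  ultimately have h: "2 * (\<bar>a\<bar> * \<bar>b\<bar>) \<le> a\<^sup>2 + b\<^sup>2" by simp
  have "0 \<le> \<bar>a\<bar> * \<bar>b\<bar>" by simp
  then have "\<bar>a\<bar> * \<bar>b\<bar> \<le> a\<^sup>2 + b\<^sup>2" using h by linarith
  then show ?thesis by (simp add: abs_mult)
qed

lemma poly_identity:
  fixes x u v r r1 H mu :: real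
  defines "q \<equiv> H\<^sup>2 * x\<^sup>2 * u - u ^ 3 - r * u + mu * u"
  shows "(v\<^sup>2 + x * (2 * v * q)) - H\<^sup>2 * (3 * x\<^sup>2 * u\<^sup>2 + x ^ 3 * (2 * u * v))
         + (u ^ 4 / 2 + x * (2 * u ^ 3 * v)) + (r * u\<^sup>2 + x * r1 * u\<^sup>2 + x * r * (2 * u * v))
         - mu * (u\<^sup>2 + x * (2 * u * v)) + (v * v + u * q)
       = 2 * v\<^sup>2 - 2 * H\<^sup>2 * (x * u)\<^sup>2 - 1/2 * u ^ 4 + u\<^sup>2 * x * r1"
  unfolding q_def by (simp add: power2_eq_square power3_eq_cube algebra_simps eval_nat_numeral)


lemma integrable_bound_real:
  fixes f g :: "real \<Rightarrow> real"
  assumes "integrable lborel g" "f \<in> borel_measurable borel" "\<And>x. \<bar>f x\<bar> \<le> g x"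
  shows "integrable lborel f"
proof (rule Bochner_Integration.integrable_bound[OF assms(1)])
  show "f \<in> borel_measurable lborel" using assms(2) by simp
  show "AE x in lborel. norm (f x) \<le> norm (g x)"
  proof (intro AE_I2)
    fix x show "norm (f x) \<le> norm (g x)" using assms(3)[of x] by (simp add: order_trans[OF _ abs_ge_self])
  qed
qed

lemma pohozaev_calc:
  fixes U V rho rho1 :: "real \<Rightarrow> real" and H mu KU Kr K1 :: real
  assumes dU: "\<And>x. (U has_real_derivative V x) (at x)"
    and dV: "\<And>x. (V has_real_derivative (H\<^sup>2 * x\<^sup>2 * U x - (U x) ^ 3 - rho x * U x + mu * U x)) (at x)"
    and drho: "\<And>x. (rho has_real_derivative rho1 x) (at x)"
    and c1: "\<And>x. isCont rho1 x"
    and iV: "integrable lborel (\<lambda>x. (V x)\<^sup>2)"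
    and ixU: "integrable lborel (\<lambda>x. (x * U x)\<^sup>2)"
    and iU: "integrable lborel (\<lambda>x. (U x)\<^sup>2)"
    and bU: "\<And>x. \<bar>U x\<bar> \<le> KU" and br: "\<And>x. \<bar>rho x\<bar> \<le> Kr" and b1: "\<And>x. \<bar>rho1 x\<bar> \<le> K1"
  shows "2 * (LINT x|lborel. (V x)\<^sup>2) - 2 * H\<^sup>2 * (LINT x|lborel. (x * U x)\<^sup>2)
         - 1/2 * (LINT x|lborel. (U x) ^ 4) + (LINT x|lborel. (U x)\<^sup>2 * x * rho1 x) = 0"
proof -
  have cU: "isCont U x" for x using dU by (rule DERIV_isCont)
  have cV: "isCont V x" for x using dV by (rule DERIV_isCont)
  have cr: "isCont rho x" for x using drho by (rule DERIV_isCont)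
  have [measurable]: "U \<in> borel_measurable borel" "V \<in> borel_measurable borel"
    "rho \<in> borel_measurable borel" "rho1 \<in> borel_measurable borel"
    using cont_meas cU cV cr c1 by auto
  have U2: "(U x)\<^sup>2 \<le> KU\<^sup>2" for x
    using power_mono[OF bU abs_ge_zero, of x 2] by simp
  have i4: "integrable lborel (\<lambda>x. (U x) ^ 4)"
  proof (rule integrable_bound_real[where g="\<lambda>x. KU\<^sup>2 * (U x)\<^sup>2"])
    show "integrable lborel (\<lambda>x. KU\<^sup>2 * (U x)\<^sup>2)" using iU by simp
    show "(\<lambda>x. (U x) ^ 4) \<in> borel_measurable borel" by measurable
    fix x
    have "(U x) ^ 4 = (U x)\<^sup>2 * (U x)\<^sup>2" by (simp add: power2_eq_square eval_nat_numeral)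
    also have "\<dots> \<le> KU\<^sup>2 * (U x)\<^sup>2" using U2[of x] by (intro mult_right_mono) auto
    finally show "\<bar>(U x) ^ 4\<bar> \<le> KU\<^sup>2 * (U x)\<^sup>2" by simp
  qed
  have K1pos: "K1 \<ge> 0" using b1[of 0] by linarith
  have Krpos: "Kr \<ge> 0" using br[of 0] by linarith
  have i5: "integrable lborel (\<lambda>x. (U x)\<^sup>2 * x * rho1 x)"
  proof (rule integrable_bound_real[where g="\<lambda>x. K1 * ((U x)\<^sup>2 + (x * U x)\<^sup>2)"])
    show "integrable lborel (\<lambda>x. K1 * ((U x)\<^sup>2 + (x * U x)\<^sup>2))" using iU ixU by auto
    show "(\<lambda>x. (U x)\<^sup>2 * x * rho1 x) \<in> borel_measurable borel" by measurable
    fix x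
    have "\<bar>(U x)\<^sup>2 * x * rho1 x\<bar> = \<bar>U x * (x * U x)\<bar> * \<bar>rho1 x\<bar>"
      by (simp add: power2_eq_square abs_mult mult_ac)
    also have "\<dots> \<le> ((U x)\<^sup>2 + (x * U x)\<^sup>2) * K1"
      by (intro mult_mono prod_le_sq b1) auto
    finally show "\<bar>(U x)\<^sup>2 * x * rho1 x\<bar> \<le> K1 * ((U x)\<^sup>2 + (x * U x)\<^sup>2)" by (simp add: mult_ac)
  qed
  have ir: "integrable lborel (\<lambda>x. \<bar>rho x\<bar> * (U x)\<^sup>2)"
  proof (rule integrable_bound_real[where g="\<lambda>x. Kr * (U x)\<^sup>2"])
    show "integrable lborel (\<lambda>x. Kr * (U x)\<^sup>2)" using iU by auto
    show "(\<lambda>x. \<bar>rho x\<bar> * (U x)\<^sup>2) \<in> borel_measurable borel" by measurable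
    fix x show "\<bar>\<bar>rho x\<bar> * (U x)\<^sup>2\<bar> \<le> Kr * (U x)\<^sup>2"
      using br[of x] by (simp add: abs_mult mult_right_mono)
  qed
  define G where "G x = 2 * (V x)\<^sup>2 - 2 * H\<^sup>2 * (x * U x)\<^sup>2 - 1/2 * (U x) ^ 4 + (U x)\<^sup>2 * x * rho1 x" for x
  define F where "F x = x * (V x)\<^sup>2 - H\<^sup>2 * (x ^ 3 * (U x)\<^sup>2) + x * (U x) ^ 4 / 2 + x * rho x * (U x)\<^sup>2
       - mu * (x * (U x)\<^sup>2) + U x * V x" for x
  have iG: "integrable lborel G" unfolding G_def using iV ixU i4 i5 by auto
  have intG: "(LINT x|lborel. G x) = 2 * (LINT x|lborel. (V x)\<^sup>2) - 2 * H\<^sup>2 * (LINT x|lborel. (x * U x)\<^sup>2)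
         - 1/2 * (LINT x|lborel. (U x) ^ 4) + (LINT x|lborel. (U x)\<^sup>2 * x * rho1 x)"
    unfolding G_def using iV ixU i4 i5 by simp
  have cG: "isCont G x" for x unfolding G_def by (intro continuous_intros cU cV c1)
  have dF: "(F has_real_derivative G x) (at x)" for x
  proof -
    define q where "q = H\<^sup>2 * x\<^sup>2 * U x - (U x) ^ 3 - rho x * U x + mu * U x"
    have d1: "((\<lambda>x. x * (V x)\<^sup>2) has_real_derivative (V x)\<^sup>2 + x * (2 * V x * q)) (at x)"
      unfolding q_def by (auto intro!: derivative_eq_intros dV simp: power2_eq_square)
    have d2: "((\<lambda>x. x ^ 3 * (U x)\<^sup>2) has_real_derivative 3 * x\<^sup>2 * (U x)\<^sup>2 + x ^ 3 * (2 * U x * V x)) (at x)"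
      by (auto intro!: derivative_eq_intros dU simp: power2_eq_square)
    have d3: "((\<lambda>x. x * (U x) ^ 4 / 2) has_real_derivative (U x) ^ 4 / 2 + x * (2 * (U x) ^ 3 * V x)) (at x)"
      by (auto intro!: derivative_eq_intros dU simp: eval_nat_numeral field_simps)
    have d4: "((\<lambda>x. x * rho x * (U x)\<^sup>2) has_real_derivative rho x * (U x)\<^sup>2 + x * rho1 x * (U x)\<^sup>2 + x * rho x * (2 * U x * V x)) (at x)"
      by (auto intro!: derivative_eq_intros dU drho simp: power2_eq_square algebra_simps)
    have d5: "((\<lambda>x. x * (U x)\<^sup>2) has_real_derivative (U x)\<^sup>2 + x * (2 * U x * V x)) (at x)"
      by (auto intro!: derivative_eq_intros dU simp: power2_eq_square algebra_simps)
    have d6: "((\<lambda>x. U x * V x) has_real_derivative V x * V x + U x * q) (at x)"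
      unfolding q_def by (auto intro!: derivative_eq_intros dU dV simp: algebra_simps)
    have "(F has_real_derivative ((V x)\<^sup>2 + x * (2 * V x * q)) - H\<^sup>2 * (3 * x\<^sup>2 * (U x)\<^sup>2 + x ^ 3 * (2 * U x * V x))
         + ((U x) ^ 4 / 2 + x * (2 * (U x) ^ 3 * V x)) + (rho x * (U x)\<^sup>2 + x * rho1 x * (U x)\<^sup>2 + x * rho x * (2 * U x * V x))
         - mu * ((U x)\<^sup>2 + x * (2 * U x * V x)) + (V x * V x + U x * q)) (at x)"
      unfolding F_def[abs_def]
      by (intro DERIV_add DERIV_diff DERIV_cmult d1 d2 d3 d4 d5 d6)
    moreover have "((V x)\<^sup>2 + x * (2 * V x * q)) - H\<^sup>2 * (3 * x\<^sup>2 * (U x)\<^sup>2 + x ^ 3 * (2 * U x * V x))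
         + ((U x) ^ 4 / 2 + x * (2 * (U x) ^ 3 * V x)) + (rho x * (U x)\<^sup>2 + x * rho1 x * (U x)\<^sup>2 + x * rho x * (2 * U x * V x))
         - mu * ((U x)\<^sup>2 + x * (2 * U x * V x)) + (V x * V x + U x * q) = G x"
      unfolding G_def q_def by (rule poly_identity)
    ultimately show ?thesis by simp
  qed
  define W where "W x = 2 * (V x)\<^sup>2 + H\<^sup>2 * (x * U x)\<^sup>2 + (U x) ^ 4 + \<bar>rho x\<bar> * (U x)\<^sup>2 + (\<bar>mu\<bar> + 1) * (U x)\<^sup>2" for x
  have iW: "integrable lborel W" unfolding W_def using iV ixU i4 ir iU by auto
  have W0: "W x \<ge> 0" for x unfolding W_def by (intro add_nonneg_nonneg mult_nonneg_nonneg) auto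
  have Fb: "\<bar>F x\<bar> \<le> \<bar>x\<bar> * W x" if x1: "\<bar>x\<bar> \<ge> 1" for x
  proof -
    have a1: "\<bar>x * (V x)\<^sup>2\<bar> = \<bar>x\<bar> * (V x)\<^sup>2" by (simp add: abs_mult)
    have a2: "\<bar>H\<^sup>2 * (x ^ 3 * (U x)\<^sup>2)\<bar> = \<bar>x\<bar> * (H\<^sup>2 * (x * U x)\<^sup>2)"
      by (simp add: abs_mult power2_eq_square power3_eq_cube mult_ac)
    have a3: "\<bar>x * (U x) ^ 4 / 2\<bar> \<le> \<bar>x\<bar> * (U x) ^ 4"
      by (simp add: abs_mult)
    have a4: "\<bar>x * rho x * (U x)\<^sup>2\<bar> = \<bar>x\<bar> * (\<bar>rho x\<bar> * (U x)\<^sup>2)" by (simp add: abs_mult)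
    have a5: "\<bar>mu * (x * (U x)\<^sup>2)\<bar> = \<bar>x\<bar> * (\<bar>mu\<bar> * (U x)\<^sup>2)" by (simp add: abs_mult)
    have "\<bar>U x * V x\<bar> \<le> (U x)\<^sup>2 + (V x)\<^sup>2" by (rule prod_le_sq)
    also have "\<dots> \<le> \<bar>x\<bar> * ((U x)\<^sup>2 + (V x)\<^sup>2)" using x1 by (intro mult_left_le_one_le[THEN order_trans[OF _ order_refl]] mult_right_mono[of 1 "\<bar>x\<bar>", simplified]) auto
    finally have a6: "\<bar>U x * V x\<bar> \<le> \<bar>x\<bar> * ((U x)\<^sup>2 + (V x)\<^sup>2)" .
    have "\<bar>F x\<bar> \<le> \<bar>x * (V x)\<^sup>2\<bar> + \<bar>H\<^sup>2 * (x ^ 3 * (U x)\<^sup>2)\<bar> + \<bar>x * (U x) ^ 4 / 2\<bar> + \<bar>x * rho x * (U x)\<^sup>2\<bar>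
        + \<bar>mu * (x * (U x)\<^sup>2)\<bar> + \<bar>U x * V x\<bar>"
      unfolding F_def by linarith
    also have "\<dots> \<le> \<bar>x\<bar> * W x"
      using a1 a2 a3 a4 a5 a6 unfolding W_def by (simp add: algebra_simps)
    finally show ?thesis .
  qed
  define Ws where "Ws x = W x + W (-x)" for x
  have iWs: "integrable lborel Ws"
  proof -
    have "integrable lborel (\<lambda>x. W (0 + (-1) * x))" using iW lborel_integrable_real_affine_iff[of "-1" W 0] by simp
    then show ?thesis unfolding Ws_def using iW by simp
  qed
  have Ws0: "Ws x \<ge> 0" for x unfolding Ws_def using W0 by (simp add: add_nonneg_nonneg)
  have "\<forall>n::nat. \<exists>R. R \<ge> real n + 1 \<and> R * Ws R < 1 / (real n + 1)"
    using seq_small[OF iWs Ws0] by (metis add_nonneg_pos of_nat_0_le_iff zero_less_one divide_pos_pos le_add_same_cancel2)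
  then obtain Rs where Rs: "\<And>n. Rs n \<ge> real n + 1" "\<And>n. Rs n * Ws (Rs n) < 1 / (real n + 1)"
    by metis
  have Fdiff: "\<bar>F (Rs n) - F (- Rs n)\<bar> \<le> 1 / (real n + 1)" for n
  proof -
    have R1: "Rs n \<ge> 1" using Rs(1)[of n] by simp
    have "\<bar>F (Rs n) - F (- Rs n)\<bar> \<le> \<bar>F (Rs n)\<bar> + \<bar>F (- Rs n)\<bar>" by linarith
    also have "\<dots> \<le> Rs n * W (Rs n) + Rs n * W (- Rs n)"
      using Fb[of "Rs n"] Fb[of "- Rs n"] R1 by simp
    also have "\<dots> = Rs n * Ws (Rs n)" by (simp add: Ws_def algebra_simps)
    finally show ?thesis using Rs(2)[of n] by simp
  qed
  have lim0: "(\<lambda>n. F (Rs n) - F (- Rs n)) \<longlonglongrightarrow> 0"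
  proof (rule Lim_null_comparison)
    show "\<forall>\<^sub>F n in sequentially. norm (F (Rs n) - F (- Rs n)) \<le> 1 / (real n + 1)"
      using Fdiff by simp
    show "(\<lambda>n. 1 / (real n + 1)) \<longlonglongrightarrow> 0"
      using LIMSEQ_inverse_real_of_nat by (simp add: inverse_eq_divide add.commute)
  qed
  have eqI: "(LINT x|lborel. indicator {- Rs n..Rs n} x * G x) = F (Rs n) - F (- Rs n)" for n
  proof -
    have "(LINT x|lborel. indicator {- Rs n..Rs n} x * G x) = (LBINT x=- Rs n..Rs n. G x)"
      using Rs(1)[of n] by (simp add: interval_integral_Icc set_lebesgue_integral_def)
    also have "\<dots> = F (Rs n) - F (- Rs n)"
    proof (rule interval_integral_FTC_finite)
      show "continuous_on {min (- Rs n) (Rs n)..max (- Rs n) (Rs n)} G"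
        by (intro continuous_at_imp_continuous_on ballI cG)
      fix x
      show "(F has_vector_derivative G x) (at x within {min (- Rs n) (Rs n)..max (- Rs n) (Rs n)})"
        using dF[of x] by (simp add: has_real_derivative_iff_has_vector_derivative[symmetric] has_field_derivative_at_within)
    qed
    finally show ?thesis .
  qed
  have "(\<lambda>n. LINT x|lborel. indicator {- Rs n..Rs n} x * G x) \<longlonglongrightarrow> (LINT x|lborel. G x)"
  proof (rule integral_dominated_convergence[where w="\<lambda>x. \<bar>G x\<bar>"])
    show "G \<in> borel_measurable lborel" using iG by auto
    show "(\<lambda>x. indicator {- Rs n..Rs n} x * G x) \<in> borel_measurable lborel" for n
      using iG by auto
    show "integrable lborel (\<lambda>x. \<bar>G x\<bar>)" using iG by auto
    show "AE x in lborel. (\<lambda>n. indicator {- Rs n..Rs n} x * G x) \<longlonglongrightarrow> G x"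
    proof (intro AE_I2 tendsto_eventually)
      fix x :: real
      obtain N :: nat where N: "\<bar>x\<bar> \<le> real N" using real_arch_simple by blast
      show "\<forall>\<^sub>F n in sequentially. indicator {- Rs n..Rs n} x * G x = G x"
        unfolding eventually_sequentially
      proof (intro exI[of _ N] allI impI)
        fix n assume "N \<le> n"
        then have "\<bar>x\<bar> \<le> Rs n" using N Rs(1)[of n] by linarith
        then show "indicator {- Rs n..Rs n} x * G x = G x" by (auto simp: indicator_def abs_if split: if_splits)
      qed
    qed
    show "AE x in lborel. norm (indicator {- Rs n..Rs n} x * G x) \<le> \<bar>G x\<bar>" for n
      by (intro AE_I2) (auto simp: indicator_def)
  qed
  then have "(\<lambda>n. F (Rs n) - F (- Rs n)) \<longlonglongrightarrow> (LINT x|lborel. G x)" by (simp add: eqI)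
  with lim0 have "(LINT x|lborel. G x) = 0" using LIMSEQ_unique by blast
  then show ?thesis using intG by simp
qed


lemma L2_AE:
  assumes "L2 f" "g \<in> borel_measurable borel" "AE x in lborel. f x = g x"
  shows "integrable lborel (\<lambda>x. (g x)\<^sup>2)"
proof -
  have [measurable]: "f \<in> borel_measurable borel" "g \<in> borel_measurable borel" using assms by (auto simp: L2_def)
  have "integrable lborel (\<lambda>x. (f x)\<^sup>2) = integrable lborel (\<lambda>x. (g x)\<^sup>2)"
    by (rule integrable_cong_AE) (use assms(3) in \<open>auto elim: AE_mp\<close>)
  then show ?thesis using assms(1) by (simp add: L2_def)
qed

lemma LB_cong_AE:
  fixes f g :: "real \<Rightarrow> real"
  assumes "f \<in> borel_measurable borel" "g \<in> borel_measurable borel" "AE x in lborel. f x = g x"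
  shows "(LBINT t=a..b. f t) = (LBINT t=a..b. g t)"
  by (rule interval_integral_cong_AE) (use assms in \<open>auto elim: AE_mp\<close>)

lemma prim_diff:
  fixes g :: "real \<Rightarrow> real" and x y c :: real
  assumes "loc_int g"
  shows "(c + (LBINT t=(0::real)..y. g t)) - (c + (LBINT t=(0::real)..x. g t)) = (LBINT t=x..y. g t)"
  using lbint_split[OF assms, of 0 x y] interval_integral_endpoints_reverse[of 0 x g]
  by (simp add: zero_ereal_def algebra_simps)

theorem lemma1:
  fixes H b lam mu :: real and u u1 r r1 :: "real \<Rightarrow> real"
  assumes "H \<noteq> 0" and "b > 0" and "lam \<ge> 0"
    and "in_XA u" and "weak_deriv u u1"
    and "is_rho lam b (\<lambda>x. (u x)\<^sup>2) r" and "weak_deriv r r1"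
    and "solves_eq H mu r u"
  shows "2 * (LINT x|lborel. (u1 x)\<^sup>2) - 2 * H\<^sup>2 * (LINT x|lborel. (x * u x)\<^sup>2)
         - 1/2 * (LINT x|lborel. (u x) ^ 4)
         + (LINT x|lborel. (u x)\<^sup>2 * x * r1 x) = 0"
proof -
  note XA = assms(4) and wu = assms(5) and rho = assms(6) and wr = assms(7) and sol = assms(8)
  have L2u: "L2 u" and L2xu: "L2 (\<lambda>x. x * u x)" using XA by (auto simp: in_XA_def in_H1_def)
  obtain g0 where wg0: "weak_deriv u g0" and L2g0: "L2 g0" using XA by (auto simp: in_XA_def in_H1_def)
  have lu: "loc_int u" and lu1: "loc_int u1" using wu by (auto simp: weak_deriv_def)
  have [measurable]: "u \<in> borel_measurable borel" "u1 \<in> borel_measurable borel"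
    using loc_int_meas[OF lu] loc_int_meas[OF lu1] by auto
  have u1g0: "AE x in lborel. g0 x = u1 x" by (rule weak_uniq[OF wg0 wu])
  have iu1: "integrable lborel (\<lambda>x. (u1 x)\<^sup>2)" by (rule L2_AE[OF L2g0 _ u1g0]) simp
  have H2r: "in_H2 r" using rho by (simp add: is_rho_def)
  obtain gr where wgr: "weak_deriv r gr" and H1gr: "in_H1 gr" using H2r by (auto simp: in_H2_def)
  have L2r: "L2 r" using H2r by (simp add: in_H2_def)
  have L2gr: "L2 gr" using H1gr by (simp add: in_H1_def)
  obtain gr2 where wgr2: "weak_deriv gr gr2" and L2gr2: "L2 gr2" using H1gr by (auto simp: in_H1_def)
  have lr: "loc_int r" and lr1: "loc_int r1" using wr by (auto simp: weak_deriv_def)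
  have lgr: "loc_int gr" and lgr2: "loc_int gr2" using wgr2 by (auto simp: weak_deriv_def)
  have [measurable]: "r \<in> borel_measurable borel" "r1 \<in> borel_measurable borel" "gr2 \<in> borel_measurable borel"
    using loc_int_meas[OF lr] loc_int_meas[OF lr1] loc_int_meas[OF lgr2] by auto
  have r1gr: "AE x in lborel. r1 x = gr x" by (rule weak_uniq[OF wr wgr])
  obtain c1 where c1: "AE x in lborel. gr x = c1 + (LBINT t=(0::real)..x. gr2 t)"
    using weak_rep[OF lgr lgr2] wgr2 unfolding weak_deriv_def by blast
  define R1 where "R1 x = c1 + (LBINT t=(0::real)..x. gr2 t)" for x :: real
  have cR1: "isCont R1 x" for x unfolding R1_def using G_cont[OF lgr2, of x 0] by (intro continuous_intros)
  have [measurable]: "R1 \<in> borel_measurable borel" by (rule cont_meas[OF cR1])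
  have r1R1: "AE x in lborel. r1 x = R1 x" using r1gr c1 unfolding R1_def by eventually_elim simp
  obtain c0 where c0: "AE x in lborel. r x = c0 + (LBINT t=(0::real)..x. r1 t)"
    using weak_rep[OF lr lr1] wr unfolding weak_deriv_def by blast
  define R0 where "R0 x = c0 + (LBINT t=(0::real)..x. R1 t)" for x :: real
  have R0eq: "(LBINT t=(0::real)..x. r1 t) = (LBINT t=(0::real)..x. R1 t)" for x :: real
    by (rule LB_cong_AE[OF _ _ r1R1]) auto
  have rR0: "AE x in lborel. r x = R0 x" using c0 unfolding R0_def R0eq by simp
  have dR0: "(R0 has_real_derivative R1 x) (at x)" for x
    unfolding R0_def using DERIV_add[OF DERIV_const prim_deriv[OF cR1, of 0 x]] by simp
  have lR1: "loc_int R1" by (rule loc_int_cont[OF cR1])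
  have iR1: "integrable lborel (\<lambda>x. (R1 x)\<^sup>2)"
  proof (rule L2_AE[OF L2gr])
    show "AE x in lborel. gr x = R1 x" using c1 unfolding R1_def by simp
  qed simp
  have iR0: "integrable lborel (\<lambda>x. (R0 x)\<^sup>2)"
  proof (rule L2_AE[OF L2r _ rR0])
    show "R0 \<in> borel_measurable borel" using dR0 by (intro cont_meas DERIV_isCont)
  qed
  obtain K1 where K1: "\<And>x. \<bar>R1 x\<bar> \<le> K1"
  proof -
    have "\<exists>K. \<forall>x. \<bar>R1 x\<bar> \<le> K"
    proof (rule bounded_H1[OF cR1 _ iR1 _])
      show "R1 y - R1 x = (LBINT t=x..y. gr2 t)" for x y :: real
        unfolding R1_def by (rule prim_diff[OF lgr2])
      show "integrable lborel (\<lambda>x. (gr2 x)\<^sup>2)" using L2gr2 by (simp add: L2_def)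
    qed simp
    then show ?thesis using that by blast
  qed
  obtain Kr where Kr: "\<And>x. \<bar>R0 x\<bar> \<le> Kr"
  proof -
    have "\<exists>K. \<forall>x. \<bar>R0 x\<bar> \<le> K"
    proof (rule bounded_H1[OF _ _ iR0 iR1])
      show "isCont R0 x" for x using dR0 by (rule DERIV_isCont)
      show "R0 y - R0 x = (LBINT t=x..y. R1 t)" for x y :: real
        unfolding R0_def by (rule prim_diff[OF lR1])
    qed simp
    then show ?thesis using that by blast
  qed
  obtain cu where cu: "AE x in lborel. u x = cu + (LBINT t=(0::real)..x. u1 t)"
    using weak_rep[OF lu lu1] wu unfolding weak_deriv_def by blast
  define U where "U x = cu + (LBINT t=(0::real)..x. u1 t)" for x :: real
  have cU: "isCont U x" for x unfolding U_def using G_cont[OF lu1, of x 0] by (intro continuous_intros)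
  have [measurable]: "U \<in> borel_measurable borel" by (rule cont_meas[OF cU])
  have uU: "AE x in lborel. u x = U x" using cu unfolding U_def by simp
  define Q where "Q x = H\<^sup>2 * x\<^sup>2 * U x - (U x) ^ 3 - R0 x * U x + mu * U x" for x
  have cQ: "isCont Q x" for x unfolding Q_def
    using dR0[of x] by (intro continuous_intros cU DERIV_isCont[of R0])
  have lQ: "loc_int Q" by (rule loc_int_cont[OF cQ])
  have wu1: "(LINT x|lborel. u1 x * deriv \<phi> x) = - (LINT x|lborel. Q x * \<phi> x)" if phi: "test_fun \<phi>" for \<phi>
  proof -
    have dphi: "test_fun (deriv \<phi>)" by (rule test_fun_deriv[OF phi])
    have e1: "(LINT x|lborel. u x * deriv (deriv \<phi>) x) = - (LINT x|lborel. u1 x * deriv \<phi> x)"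
      using wu dphi unfolding weak_deriv_def by blast
    have e2: "(LINT x|lborel. u x * deriv (deriv \<phi>) x)
          = (LINT x|lborel. (H\<^sup>2 * x\<^sup>2 * u x - (u x) ^ 3 - r x * u x + mu * u x) * \<phi> x)"
      using sol phi unfolding solves_eq_def by blast
    have [measurable]: "\<phi> \<in> borel_measurable borel"
      using test_props[OF phi] cont_meas by metis
    have e3: "(LINT x|lborel. (H\<^sup>2 * x\<^sup>2 * u x - (u x) ^ 3 - r x * u x + mu * u x) * \<phi> x)
          = (LINT x|lborel. Q x * \<phi> x)"
    proof (rule integral_cong_AE)
      show "AE x in lborel. (H\<^sup>2 * x\<^sup>2 * u x - (u x) ^ 3 - r x * u x + mu * u x) * \<phi> x = Q x * \<phi> x"
        using uU rR0 by eventually_elim (simp add: Q_def)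
      show "(\<lambda>x. Q x * \<phi> x) \<in> borel_measurable lborel" using cont_meas[OF cQ] by measurable
    qed measurable
    show ?thesis using e1 e2 e3 by simp
  qed
  obtain c2 where c2: "AE x in lborel. u1 x = c2 + (LBINT t=(0::real)..x. Q t)"
    using weak_rep[OF lu1 lQ wu1] by blast
  define V where "V x = c2 + (LBINT t=(0::real)..x. Q t)" for x :: real
  have dV: "(V has_real_derivative Q x) (at x)" for x
    unfolding V_def using DERIV_add[OF DERIV_const prim_deriv[OF cQ, of 0 x]] by simp
  have cV: "isCont V x" for x using dV by (rule DERIV_isCont)
  have [measurable]: "V \<in> borel_measurable borel" by (rule cont_meas[OF cV])
  have u1V: "AE x in lborel. u1 x = V x" using c2 unfolding V_def by simp
  have Ueq: "U x = cu + (LBINT t=(0::real)..x. V t)" for x :: real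
    unfolding U_def by (simp add: LB_cong_AE[OF _ _ u1V])
  have dU: "(U has_real_derivative V x) (at x)" for x
  proof -
    have "((\<lambda>x. cu + (LBINT t=(0::real)..x. V t)) has_real_derivative V x) (at x)"
      using DERIV_add[OF DERIV_const prim_deriv[OF cV, of 0 x]] by simp
    moreover have "(\<lambda>x. cu + (LBINT t=(0::real)..x. V t)) = U" using Ueq by auto
    ultimately show ?thesis by simp
  qed
  have lV: "loc_int V" by (rule loc_int_cont[OF cV])
  have iU: "integrable lborel (\<lambda>x. (U x)\<^sup>2)" by (rule L2_AE[OF L2u _ uU]) simp
  have iV: "integrable lborel (\<lambda>x. (V x)\<^sup>2)" by (rule L2_AE[OF _ _ u1V]) (use iu1 in \<open>auto simp: L2_def\<close>)
  have ixU: "integrable lborel (\<lambda>x. (x * U x)\<^sup>2)"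
    by (rule L2_AE[OF L2xu]) (use uU in \<open>auto elim: AE_mp\<close>)
  obtain KU where KU: "\<And>x. \<bar>U x\<bar> \<le> KU"
  proof -
    have "\<exists>K. \<forall>x. \<bar>U x\<bar> \<le> K"
    proof (rule bounded_H1[OF cU _ iU iV])
      show "U y - U x = (LBINT t=x..y. V t)" for x y :: real
        unfolding Ueq by (rule prim_diff[OF lV])
    qed simp
    then show ?thesis using that by blast
  qed
  have main: "2 * (LINT x|lborel. (V x)\<^sup>2) - 2 * H\<^sup>2 * (LINT x|lborel. (x * U x)\<^sup>2)
         - 1/2 * (LINT x|lborel. (U x) ^ 4) + (LINT x|lborel. (U x)\<^sup>2 * x * R1 x) = 0"
    by (rule pohozaev_calc[OF dU dV[unfolded Q_def] dR0 cR1 iV ixU iU KU Kr K1])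
  have i1: "(LINT x|lborel. (u1 x)\<^sup>2) = (LINT x|lborel. (V x)\<^sup>2)"
    by (rule integral_cong_AE) (use u1V in \<open>auto elim: AE_mp\<close>)
  have i2: "(LINT x|lborel. (x * u x)\<^sup>2) = (LINT x|lborel. (x * U x)\<^sup>2)"
    by (rule integral_cong_AE) (use uU in \<open>auto elim: AE_mp\<close>)
  have i3: "(LINT x|lborel. (u x) ^ 4) = (LINT x|lborel. (U x) ^ 4)"
    by (rule integral_cong_AE) (use uU in \<open>auto elim: AE_mp\<close>)
  have i4: "(LINT x|lborel. (u x)\<^sup>2 * x * r1 x) = (LINT x|lborel. (U x)\<^sup>2 * x * R1 x)"
    by (rule integral_cong_AE) (use uU r1R1 in \<open>auto elim: AE_mp\<close>)
  show ?thesis using main i1 i2 i3 i4 by simp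
qed

end
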